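(* Let $n\ge 0$ and $0\le k\le n$ be integers. The number of isomorphism classes of linear Nakayama algebras $A$ with $n+2$ simple modules such that $\dim_K\operatorname{Ext}^1_A(J,J)=k$, where $J$ is the Jacobson radical of $A$, equals the number of standard Young tableaux of shape $[n,k]$. In particular, the number of such Nakayama algebras for which $\dim_K\operatorname{Ext}^1_A(J,J)$ equals the maximal possible value $n$ is the Catalan number $C_n=\frac{1}{n+1}\binom{2n}{n}$.
   Context: $K$ is a field. A linear Nakayama algebra with $m$ simple modules is a connected algebra $KQ/I$ with $Q$ the linearly oriented quiver $0\to1\to\cdots\to m-1$ and $I$ an admissible ideal; modules are finite-dimensional right modules and $J$ is the Jacobson radical regarded as a right module. A standard Young tableau of shape $[n,k]$ is a filling of the Young diagram with two rows of lengths $n$ and $k$ (one row if $k=0$) by $1,\dots,n+k$, increasing along rows and down columns. *)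

theory Defs
  imports Main "HOL-Library.Function_Algebras" "Jordan_Normal_Form.Matrix"
begin

text \<open>Paths of the linear quiver 0 -> 1 -> ... -> m-1 are identified with pairs (i,j), i <= j < m
(the unique path from i to j, of length j - i). Every ideal of KQ is spanned by the paths it
contains (between two vertices there is at most one path), so an admissible ideal I is the
same as a set of paths of length >= 2 closed under left and right extension (admissibility's
condition R^N contained in I is automatic, Q being finite and acyclic).\<close>

definition lin_nak_ideal :: "nat \<Rightarrow> (nat \<times> nat) set \<Rightarrow> bool" where
  "lin_nak_ideal m I \<longleftrightarrow>
     I \<subseteq> {(i, j). i + 2 \<le> j \<and> j < m} \<and>
     (\<forall>i j i' j'. (i, j) \<in> I \<longrightarrow> i' \<le> i \<longrightarrow> j \<le> j' \<longrightarrow> j' < m \<longrightarrow> (i', j') \<in> I)"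

text \<open>A representation is given by dimensions d j and matrices f j : K^(d j) -> K^(d (j+1)).
pmap d f i l is the linear map along the path of length l starting at i.\<close>

fun pmap :: "(nat \<Rightarrow> nat) \<Rightarrow> (nat \<Rightarrow> 'k::field mat) \<Rightarrow> nat \<Rightarrow> nat \<Rightarrow> 'k mat" where
  "pmap d f i 0 = 1\<^sub>m (d i)"
| "pmap d f i (Suc l) = f (i + l) * pmap d f i l"

definition is_rep :: "nat \<Rightarrow> (nat \<times> nat) set \<Rightarrow> (nat \<Rightarrow> nat) \<Rightarrow> (nat \<Rightarrow> 'k::field mat) \<Rightarrow> bool" where
  "is_rep m I d f \<longleftrightarrow>
     (\<forall>j. Suc j < m \<longrightarrow> f j \<in> carrier_mat (d (Suc j)) (d j)) \<and>
     (\<forall>(i, j) \<in> I. pmap d f i (j - i) = 0\<^sub>m (d j) (d i))"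

text \<open>An extension 0 -> N -> E -> M -> 0 has E_j = N_j (+) M_j and structure maps
[[fN j, h j], [0, fM j]]; h is encoded by its coordinates hc j r s.
Ext^1(M,N) = Z / B, where Z = those h for which E is a module over KQ/I and
B = those h giving an extension equivalent to the split one.\<close>

definition hmat :: "(nat \<Rightarrow> nat) \<Rightarrow> (nat \<Rightarrow> nat) \<Rightarrow> (nat \<Rightarrow> nat \<Rightarrow> nat \<Rightarrow> 'k) \<Rightarrow> nat \<Rightarrow> 'k mat" where
  "hmat dM dN hc j = mat (dN (Suc j)) (dM j) (\<lambda>(r, s). hc j r s)"

definition hsupp :: "nat \<Rightarrow> (nat \<Rightarrow> nat) \<Rightarrow> (nat \<Rightarrow> nat) \<Rightarrow> (nat \<Rightarrow> nat \<Rightarrow> nat \<Rightarrow> 'k::zero) \<Rightarrow> bool" where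
  "hsupp m dM dN hc \<longleftrightarrow>
     (\<forall>j r s. hc j r s \<noteq> 0 \<longrightarrow> Suc j < m \<and> r < dN (Suc j) \<and> s < dM j)"

definition ext_cocycles ::
  "nat \<Rightarrow> (nat \<times> nat) set \<Rightarrow> (nat \<Rightarrow> nat) \<Rightarrow> (nat \<Rightarrow> 'k::field mat) \<Rightarrow>
   (nat \<Rightarrow> nat) \<Rightarrow> (nat \<Rightarrow> 'k mat) \<Rightarrow> (nat \<Rightarrow> nat \<Rightarrow> nat \<Rightarrow> 'k) set" where
  "ext_cocycles m I dM fM dN fN =
     {hc. hsupp m dM dN hc \<and>
          is_rep m I (\<lambda>j. dN j + dM j)
            (\<lambda>j. four_block_mat (fN j) (hmat dM dN hc j) (0\<^sub>m (dM (Suc j)) (dN j)) (fM j))}"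

definition ext_coboundaries ::
  "nat \<Rightarrow> (nat \<Rightarrow> nat) \<Rightarrow> (nat \<Rightarrow> 'k::field mat) \<Rightarrow>
   (nat \<Rightarrow> nat) \<Rightarrow> (nat \<Rightarrow> 'k mat) \<Rightarrow> (nat \<Rightarrow> nat \<Rightarrow> nat \<Rightarrow> 'k) set" where
  "ext_coboundaries m dM fM dN fN =
     {hc. hsupp m dM dN hc \<and>
          (\<exists>g. (\<forall>j<m. g j \<in> carrier_mat (dN j) (dM j)) \<and>
               (\<forall>j. Suc j < m \<longrightarrow> hmat dM dN hc j = fN j * g j - g (Suc j) * fM j))}"

definition cscale :: "'k::field \<Rightarrow> (nat \<Rightarrow> nat \<Rightarrow> nat \<Rightarrow> 'k) \<Rightarrow> (nat \<Rightarrow> nat \<Rightarrow> nat \<Rightarrow> 'k)" where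
  "cscale c hc = (\<lambda>j r s. c * hc j r s)"

definition ext1_dim ::
  "nat \<Rightarrow> (nat \<times> nat) set \<Rightarrow> (nat \<Rightarrow> nat) \<Rightarrow> (nat \<Rightarrow> 'k::field mat) \<Rightarrow>
   (nat \<Rightarrow> nat) \<Rightarrow> (nat \<Rightarrow> 'k mat) \<Rightarrow> nat" where
  "ext1_dim m I dM fM dN fN =
     vector_space.dim cscale (ext_cocycles m I dM fM dN fN)
     - vector_space.dim cscale (ext_coboundaries m dM fM dN fN)"

text \<open>(A_A) e_j has basis the nonzero paths ending at j; J e_j has basis the nonzero paths
of length >= 1 ending at j, i.e. the starting points i < j with (i,j) not in I (listed
increasingly). The arrow j -> j+1 acts by p |-> p alpha.\<close>

definition jbasis :: "(nat \<times> nat) set \<Rightarrow> nat \<Rightarrow> nat list" where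
  "jbasis I j = filter (\<lambda>i. (i, j) \<notin> I) [0..<j]"

definition jdim :: "(nat \<times> nat) set \<Rightarrow> nat \<Rightarrow> nat" where
  "jdim I j = length (jbasis I j)"

definition jmap :: "(nat \<times> nat) set \<Rightarrow> nat \<Rightarrow> 'k::field mat" where
  "jmap I j = mat (jdim I (Suc j)) (jdim I j)
     (\<lambda>(r, s). if jbasis I (Suc j) ! r = jbasis I j ! s then 1 else 0)"

definition ext1_JJ :: "'k::field itself \<Rightarrow> nat \<Rightarrow> (nat \<times> nat) set \<Rightarrow> nat" where
  "ext1_JJ (_ :: 'k itself) m I =
     ext1_dim m I (jdim I) (jmap I :: nat \<Rightarrow> 'k mat) (jdim I) (jmap I)"

definition syt_cells :: "nat \<Rightarrow> nat \<Rightarrow> (nat \<times> nat) set" where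
  "syt_cells n k = {(0, c) | c. c < n} \<union> {(1, c) | c. c < k}"

definition is_syt :: "nat \<Rightarrow> nat \<Rightarrow> (nat \<times> nat \<Rightarrow> nat) \<Rightarrow> bool" where
  "is_syt n k T \<longleftrightarrow>
     bij_betw T (syt_cells n k) {1..n + k} \<and>
     (\<forall>p. p \<notin> syt_cells n k \<longrightarrow> T p = 0) \<and>
     (\<forall>r c. (r, c) \<in> syt_cells n k \<and> (r, Suc c) \<in> syt_cells n k \<longrightarrow> T (r, c) < T (r, Suc c)) \<and>
     (\<forall>c. (0, c) \<in> syt_cells n k \<and> (1, c) \<in> syt_cells n k \<longrightarrow> T (0, c) < T (1, c))"

definition syt_count :: "nat \<Rightarrow> nat \<Rightarrow> nat" where
  "syt_count n k = card {T. is_syt n k T}"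

end

theory Submission
  imports Defs
begin

fun fb :: "nat \<Rightarrow> nat \<Rightarrow> nat" where
  "fb 0 j = (if j = 0 then 1 else 0)"
| "fb (Suc p) j = (if j \<le> Suc p then (\<Sum>i\<le>j. fb p i) else 0)"

lemma fb_zero: "p < j \<Longrightarrow> fb p j = 0"
  by (cases p) auto

lemma fb_rec: "k \<le> Suc p \<Longrightarrow> fb (Suc p) k = fb p k + (if k = 0 then 0 else fb (Suc p) (k - 1))"
  by (cases k) auto

lemma fb_0: "fb n 0 = 1"
  by (induction n) auto

lemma fb_binom: "k \<le> Suc n \<Longrightarrow> int (fb n k) = int ((n + k) choose k) - (if k = 0 then 0 else int ((n + k) choose (k - 1)))"
proof (induction "n + k" arbitrary: n k rule: less_induct)
  case less
  show ?case
  proof (cases k)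
    case 0
    then show ?thesis by (simp add: fb_0)
  next
    case (Suc k')
    show ?thesis
    proof (cases n)
      case 0
      then show ?thesis using Suc less.prems by auto
    next
      case (Suc p)
      note kS = \<open>k = Suc k'\<close>
      show ?thesis
      proof (cases "k \<le> n")
        case True
        have r: "fb n k = fb p k + fb n k'"
          using fb_rec[of k p] True Suc kS by simp
        have i1: "int (fb p k) = int ((p + k) choose k) - int ((p + k) choose k')"
          using less.hyps[of p k] True Suc kS by simp
        have i2: "int (fb n k') = int ((n + k') choose k') - (if k' = 0 then 0 else int ((n + k') choose (k' - 1)))"
          using less.hyps[of n k'] True Suc kS by simp
        show ?thesis
        proof (cases k')
          case 0
          then show ?thesis using r i1 i2 Suc kS by simp
        next
          case (Suc k'')
          have e1: "(n + k) choose k = ((p + k) choose k) + ((p + k) choose k')"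
            using \<open>n = Suc p\<close> kS by simp
          have e2: "(n + k) choose k' = ((p + k) choose k') + ((p + k) choose k'')"
            using Suc \<open>n = Suc p\<close> kS by simp
          have e3: "n + k' = p + k" using \<open>n = Suc p\<close> kS by simp
          show ?thesis using r i1 i2 e1 e2 e3 Suc kS by simp
        qed
      next
        case False
        then have k: "k = Suc n" using less.prems by simp
        have "fb n k = 0" using k fb_zero by simp
        moreover have "(n + k) choose k = (n + k) choose k'"
          using k kS binomial_symmetric[of k "n + k"] by simp
        ultimately show ?thesis using kS by simp
      qed
    qed
  qed
qed

lemma fb_catalan: "real (fb n n) = real ((2 * n) choose n) / real (n + 1)"
proof (cases "n = 0")
  case True
  then show ?thesis by simp
next
  case False
  then obtain p where p: "n = Suc p" by (cases n) auto
  have f0: "int (fb n n) = int ((n + n) choose n) - (if n = 0 then 0 else int ((n + n) choose (n - 1)))"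
    by (rule fb_binom) simp
  have f: "int (fb n n) = int ((2*n) choose n) - int ((2*n) choose (n - 1))"
    using f0 False by (simp only: mult_2 if_False)
  have a: "Suc p * (Suc (p + n) choose Suc p) = Suc n * (Suc (p + n) choose p)"
    by (rule Suc_times_binomial_add)
  have b: "Suc (p + n) = 2 * n" "Suc p = n" "p = n - 1" using p by auto
  have a2: "n * ((2*n) choose n) = (n + 1) * ((2*n) choose (n - 1))"
    using a unfolding p by (simp del: binomial_Suc_Suc add: mult_2)
  define C where "C = real ((2*n) choose n)"
  define D where "D = real ((2*n) choose (n - 1))"
  have e: "real (fb n n) = C - D"
    using f unfolding C_def D_def by (metis of_int_diff of_int_of_nat_eq)
  have h2: "D * real (n + 1) = real n * C"
    using arg_cong[OF a2, of real] unfolding C_def D_def by (simp only: of_nat_mult mult.commute)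
  have "real (fb n n) * real (n + 1) = C * real (n + 1) - D * real (n + 1)"
    unfolding e by (simp add: algebra_simps)
  also have "\<dots> = C * real (n + 1) - real n * C" by (simp only: h2)
  also have "\<dots> = C" by (simp add: algebra_simps)
  finally show ?thesis unfolding C_def[symmetric]
    by (simp add: field_simps del: of_nat_Suc)
qed

lemma cells_iff[simp]: "((r, c) \<in> syt_cells n k) \<longleftrightarrow> ((r = 0 \<and> c < n) \<or> (r = 1 \<and> c < k))"
  by (auto simp: syt_cells_def)

definition sytset :: "nat \<Rightarrow> nat \<Rightarrow> (nat \<times> nat \<Rightarrow> nat) set" where
  "sytset n k = {T. is_syt n k T}"

lemma syt_range: "is_syt n k T \<Longrightarrow> p \<in> syt_cells n k \<Longrightarrow> T p \<in> {1..n+k}"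
  unfolding is_syt_def bij_betw_def by auto

lemma syt_00: "sytset 0 0 = {\<lambda>_. 0}"
proof -
  have "is_syt 0 0 T \<longleftrightarrow> T = (\<lambda>_. 0)" for T
    unfolding is_syt_def bij_betw_def syt_cells_def by auto
  then show ?thesis unfolding sytset_def by auto
qed

lemma bij_upd_insert:
  assumes "bij_betw T A B" "p \<notin> A" "v \<notin> B"
  shows "bij_betw (T(p := v)) (insert p A) (insert v B)"
  using assms unfolding bij_betw_def inj_on_def by (auto simp: image_def split: if_splits)

lemma bij_upd_remove:
  assumes "bij_betw T A B" "p \<in> A" "T p = v"
  shows "bij_betw (T(p := 0)) (A - {p}) (B - {v})"
  using assms unfolding bij_betw_def inj_on_def by (auto simp: image_def split: if_splits)

lemma syt_A_fwd:
  assumes T: "is_syt (Suc n) k T" and v: "T (0, n) = Suc n + k" and kn: "k \<le> Suc n"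
  shows "k < Suc n \<and> is_syt n k (T((0, n) := 0))"
proof -
  have kl: "k < Suc n"
  proof (rule ccontr)
    assume "\<not> k < Suc n"
    then have "(1, n) \<in> syt_cells (Suc n) k" "(0, n) \<in> syt_cells (Suc n) k" using kn by auto
    then have "T (0, n) < T (1, n)" "T (1,n) \<le> Suc n + k" using T syt_range[OF T] unfolding is_syt_def by auto
    then show False using v by simp
  qed
  have cells: "syt_cells (Suc n) k - {(0, n)} = syt_cells n k"
    by auto
  have rng: "{1..Suc n + k} - {Suc n + k} = {1..n+k}" by auto
  have "bij_betw (T((0, n) := 0)) (syt_cells (Suc n) k - {(0, n)}) ({1..Suc n + k} - {Suc n + k})"
    using T v by (intro bij_upd_remove) (auto simp: is_syt_def)
  then have b: "bij_betw (T((0, n) := 0)) (syt_cells n k) {1..n+k}" using cells rng by simp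
  show ?thesis using T kl b unfolding is_syt_def by auto
qed

lemma syt_A_bwd:
  assumes T: "is_syt n k T" and kl: "k < Suc n"
  shows "is_syt (Suc n) k (T((0, n) := Suc n + k))"
proof -
  have t0: "T (0, n) = 0" using T unfolding is_syt_def by auto
  have cells: "syt_cells (Suc n) k = insert (0, n) (syt_cells n k)"
    by auto
  have rng: "{1..Suc n + k} = insert (Suc n + k) {1..n+k}" by auto
  have b: "bij_betw (T((0, n) := Suc n + k)) (syt_cells (Suc n) k) {1..Suc n + k}"
    unfolding cells rng using T by (intro bij_upd_insert) (auto simp: is_syt_def)
  have rg: "\<And>p. p \<in> syt_cells n k \<Longrightarrow> T p \<le> n + k" using syt_range[OF T] by auto
  show ?thesis
    unfolding is_syt_def
  proof (intro conjI allI impI)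
    show "bij_betw (T((0, n) := Suc n + k)) (syt_cells (Suc n) k) {1..Suc n + k}" by (rule b)
  next
    fix p assume "p \<notin> syt_cells (Suc n) k"
    moreover obtain r c where "p = (r, c)" by force
    ultimately show "(T((0, n) := Suc n + k)) p = 0" using T unfolding is_syt_def by auto
  next
    fix r c assume a: "(r, c) \<in> syt_cells (Suc n) k \<and> (r, Suc c) \<in> syt_cells (Suc n) k"
    show "(T((0, n) := Suc n + k)) (r, c) < (T((0, n) := Suc n + k)) (r, Suc c)"
    proof (cases "(r, Suc c) = (0, n)")
      case True
      then have "(r, c) \<in> syt_cells n k" "(r,c) \<noteq> (0,n)" using a by auto
      then show ?thesis using True rg[of "(r,c)"] by auto
    next
      case False
      then have "(r, c) \<in> syt_cells n k \<and> (r, Suc c) \<in> syt_cells n k" "(r,c) \<noteq> (0,n)" using a kl by auto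
      then show ?thesis using False T unfolding is_syt_def by auto
    qed
  next
    fix c assume a: "(0, c) \<in> syt_cells (Suc n) k \<and> (1, c) \<in> syt_cells (Suc n) k"
    then have "(0, c) \<in> syt_cells n k \<and> (1, c) \<in> syt_cells n k" "c \<noteq> n" using kl by auto
    then show "(T((0, n) := Suc n + k)) (0, c) < (T((0, n) := Suc n + k)) (1, c)"
      using T unfolding is_syt_def by auto
  qed
qed

lemma syt_B_fwd:
  assumes T: "is_syt n (Suc k) T" and v: "T (1, k) = n + Suc k" and kn: "Suc k \<le> n"
  shows "is_syt n k (T((1, k) := 0))"
proof -
  have cells: "syt_cells n (Suc k) - {(1, k)} = syt_cells n k"
    by auto
  have rng: "{1..n + Suc k} - {n + Suc k} = {1..n+k}" by auto
  have "bij_betw (T((1, k) := 0)) (syt_cells n (Suc k) - {(1, k)}) ({1..n + Suc k} - {n + Suc k})"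
    using T v by (intro bij_upd_remove) (auto simp: is_syt_def)
  then have b: "bij_betw (T((1, k) := 0)) (syt_cells n k) {1..n+k}" using cells rng by simp
  show ?thesis using T b unfolding is_syt_def by auto
qed

lemma syt_B_bwd:
  assumes T: "is_syt n k T" and kl: "Suc k \<le> n"
  shows "is_syt n (Suc k) (T((1, k) := n + Suc k))"
proof -
  have t0: "T (1, k) = 0" using T unfolding is_syt_def by auto
  have cells: "syt_cells n (Suc k) = insert (1, k) (syt_cells n k)"
    by auto
  have rng: "{1..n + Suc k} = insert (n + Suc k) {1..n+k}" by auto
  have b: "bij_betw (T((1, k) := n + Suc k)) (syt_cells n (Suc k)) {1..n + Suc k}"
    unfolding cells rng using T by (intro bij_upd_insert) (auto simp: is_syt_def)
  have rg: "\<And>p. p \<in> syt_cells n k \<Longrightarrow> T p \<le> n + k" using syt_range[OF T] by auto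
  show ?thesis
    unfolding is_syt_def
  proof (intro conjI allI impI)
    show "bij_betw (T((1, k) := n + Suc k)) (syt_cells n (Suc k)) {1..n + Suc k}" by (rule b)
  next
    fix p assume "p \<notin> syt_cells n (Suc k)"
    moreover obtain r c where "p = (r, c)" by force
    ultimately show "(T((1, k) := n + Suc k)) p = 0" using T unfolding is_syt_def by auto
  next
    fix r c assume a: "(r, c) \<in> syt_cells n (Suc k) \<and> (r, Suc c) \<in> syt_cells n (Suc k)"
    show "(T((1, k) := n + Suc k)) (r, c) < (T((1, k) := n + Suc k)) (r, Suc c)"
    proof (cases "(r, Suc c) = (1, k)")
      case True
      then have "(r, c) \<in> syt_cells n k" "(r,c) \<noteq> (1,k)" using a by auto
      then show ?thesis using True rg[of "(r,c)"] by auto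
    next
      case False
      then have "(r, c) \<in> syt_cells n k \<and> (r, Suc c) \<in> syt_cells n k" "(r,c) \<noteq> (1,k)" using a kl by auto
      then show ?thesis using False T unfolding is_syt_def by auto
    qed
  next
    fix c assume a: "(0, c) \<in> syt_cells n (Suc k) \<and> (1, c) \<in> syt_cells n (Suc k)"
    show "(T((1, k) := n + Suc k)) (0, c) < (T((1, k) := n + Suc k)) (1, c)"
    proof (cases "c = k")
      case True
      then have "(0, c) \<in> syt_cells n k" using kl by auto
      then show ?thesis using True rg[of "(0,c)"] by auto
    next
      case False
      then have "(0, c) \<in> syt_cells n k \<and> (1, c) \<in> syt_cells n k" using a by auto
      then show ?thesis using False T unfolding is_syt_def by auto
    qed
  qed
qed

lemma syt_max_pos:
  assumes T: "is_syt n k T" and nk: "0 < n + k"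
  shows "(0 < n \<and> T (0, n - 1) = n + k) \<or> (0 < k \<and> T (1, k - 1) = n + k)"
proof -
  obtain p where p: "p \<in> syt_cells n k" "T p = n + k"
    using T nk unfolding is_syt_def bij_betw_def by (metis atLeastAtMost_iff imageE le_add2 le_refl less_one not_le)
  obtain r c where rc: "p = (r, c)" by force
  show ?thesis
  proof (cases "r = 0")
    case True
    have "c = n - 1"
    proof (rule ccontr)
      assume "c \<noteq> n - 1"
      then have "(0, Suc c) \<in> syt_cells n k" "(0, c) \<in> syt_cells n k" using p rc True by auto
      then have "T (0, c) < T (0, Suc c)" "T (0, Suc c) \<le> n + k" using T syt_range[OF T] unfolding is_syt_def by auto
      then show False using p rc True by simp
    qed
    then show ?thesis using p rc True by auto
  next
    case False
    then have r1: "r = 1" using p rc by auto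
    have "c = k - 1"
    proof (rule ccontr)
      assume "c \<noteq> k - 1"
      then have "(1, Suc c) \<in> syt_cells n k" "(1, c) \<in> syt_cells n k" using p rc r1 by auto
      then have "T (1, c) < T (1, Suc c)" "T (1, Suc c) \<le> n + k" using T syt_range[OF T] unfolding is_syt_def by auto
      then show False using p rc r1 by simp
    qed
    then show ?thesis using p rc r1 by auto
  qed
qed


lemma syt_inj_cells: "is_syt n k T \<Longrightarrow> p \<in> syt_cells n k \<Longrightarrow> q \<in> syt_cells n k \<Longrightarrow> T p = T q \<Longrightarrow> p = q"
  unfolding is_syt_def bij_betw_def inj_on_def by blast

lemma syt_split:
  assumes kn: "k \<le> Suc n"
  shows "sytset (Suc n) k =
    (if k < Suc n then (\<lambda>T. T((0, n) := Suc n + k)) ` sytset n k else {}) \<union>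
    (if 0 < k then (\<lambda>T. T((1, k - 1) := Suc n + k)) ` sytset (Suc n) (k - 1) else {})"
    (is "?L = ?A \<union> ?B")
proof
  show "?L \<subseteq> ?A \<union> ?B"
  proof
    fix T assume "T \<in> ?L"
    then have T: "is_syt (Suc n) k T" unfolding sytset_def by simp
    from syt_max_pos[OF T] have "T (0, n) = Suc n + k \<or> (0 < k \<and> T (1, k - 1) = Suc n + k)" by auto
    then show "T \<in> ?A \<union> ?B"
    proof
      assume v: "T (0, n) = Suc n + k"
      from syt_A_fwd[OF T v kn] have a: "k < Suc n" "is_syt n k (T((0, n) := 0))" by auto
      have "T = (T((0, n) := 0))((0, n) := Suc n + k)" using v by auto
      then have "T \<in> (\<lambda>T. T((0, n) := Suc n + k)) ` sytset n k" using a unfolding sytset_def by blast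
      then show ?thesis using a by auto
    next
      assume v: "0 < k \<and> T (1, k - 1) = Suc n + k"
      then obtain k' where k': "k = Suc k'" by (cases k) auto
      have v': "T (1, k') = Suc n + Suc k'" using v k' by simp
      have "is_syt (Suc n) k' (T((1, k') := 0))" using syt_B_fwd[of "Suc n" k' T] T v' kn k' by simp
      moreover have "T = (T((1, k') := 0))((1, k') := Suc n + k)" using v' k' by auto
      ultimately have "T \<in> (\<lambda>T. T((1, k') := Suc n + k)) ` sytset (Suc n) k'"
        unfolding sytset_def by (intro image_eqI[of T _ "T((1, k') := 0)"]) auto
      then have "T \<in> (\<lambda>T. T((1, k - 1) := Suc n + k)) ` sytset (Suc n) (k - 1)"
        using k' by simp
      then show ?thesis using k' by auto
    qed
  qed
next
  show "?A \<union> ?B \<subseteq> ?L"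
  proof
    fix T assume "T \<in> ?A \<union> ?B"
    then show "T \<in> ?L"
    proof
      assume "T \<in> ?A"
      then obtain T' where "k < Suc n" "is_syt n k T'" "T = T'((0, n) := Suc n + k)"
        unfolding sytset_def by (auto split: if_splits)
      then show ?thesis using syt_A_bwd unfolding sytset_def by auto
    next
      assume "T \<in> ?B"
      then obtain T' k' where "k = Suc k'" "is_syt (Suc n) k' T'" "T = T'((1, k') := Suc n + k)"
        unfolding sytset_def by (cases k) (auto split: if_splits)
      then show ?thesis using syt_B_bwd[of "Suc n" k' T'] kn unfolding sytset_def by auto
    qed
  qed
qed

lemma syt_card: "k \<le> n \<Longrightarrow> finite (sytset n k) \<and> card (sytset n k) = fb n k"
proof (induction "n + k" arbitrary: n k rule: less_induct)
  case less
  show ?case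
  proof (cases "n = 0")
    case True
    then have "k = 0" using less.prems by simp
    then show ?thesis using True syt_00 by simp
  next
    case False
    then obtain p where p: "n = Suc p" by (cases n) auto
    define A where "A = (if k < Suc p then (\<lambda>T. T((0, p) := Suc p + k)) ` sytset p k else {})"
    define B where "B = (if 0 < k then (\<lambda>T. T((1, k - 1) := Suc p + k)) ` sytset (Suc p) (k - 1) else {})"
    have split: "sytset n k = A \<union> B" unfolding A_def B_def p using syt_split less.prems p by simp
    have fA: "finite A \<and> card A = fb p k"
    proof (cases "k < Suc p")
      case True
      have ih: "finite (sytset p k) \<and> card (sytset p k) = fb p k" using less.hyps[of p k] True p by simp
      have inj: "inj_on (\<lambda>T. T((0, p) := Suc p + k)) (sytset p k)"
      proof (rule inj_onI)
        fix T1 T2 assume a: "T1 \<in> sytset p k" "T2 \<in> sytset p k" "T1((0, p) := Suc p + k) = T2((0, p) := Suc p + k)"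
        have "T1 (0, p) = 0" "T2 (0, p) = 0" using a(1,2) unfolding sytset_def is_syt_def by auto
        then show "T1 = T2" using a(3) by (metis fun_upd_triv fun_upd_upd)
      qed
      then show ?thesis using ih True unfolding A_def by (simp add: card_image)
    next
      case False
      then show ?thesis unfolding A_def using fb_zero by simp
    qed
    have fB: "finite B \<and> card B = (if k = 0 then 0 else fb (Suc p) (k - 1))"
    proof (cases "0 < k")
      case True
      have ih: "finite (sytset (Suc p) (k - 1)) \<and> card (sytset (Suc p) (k - 1)) = fb (Suc p) (k - 1)"
        using less.hyps[of "Suc p" "k - 1"] True p less.prems by simp
      have inj: "inj_on (\<lambda>T. T((1, k - 1) := Suc p + k)) (sytset (Suc p) (k - 1))"
      proof (rule inj_onI)
        fix T1 T2 assume a: "T1 \<in> sytset (Suc p) (k - 1)" "T2 \<in> sytset (Suc p) (k - 1)"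
          "T1((1, k - 1) := Suc p + k) = T2((1, k - 1) := Suc p + k)"
        have "T1 (1, k - 1) = 0" "T2 (1, k - 1) = 0" using a(1,2) unfolding sytset_def is_syt_def by auto
        then show "T1 = T2" using a(3) by (metis fun_upd_triv fun_upd_upd)
      qed
      then show ?thesis using ih True unfolding B_def by (simp add: card_image)
    next
      case False
      then show ?thesis unfolding B_def by simp
    qed
    have disj: "A \<inter> B = {}"
    proof (rule ccontr)
      assume "A \<inter> B \<noteq> {}"
      then obtain T where T: "T \<in> A" "T \<in> B" by blast
      then have k: "k < Suc p" "0 < k" unfolding A_def B_def by (auto split: if_splits)
      have "T \<in> sytset n k" using split T by blast
      then have st: "is_syt (Suc p) k T" unfolding sytset_def p by simp
      have "T (0, p) = Suc p + k" using T(1) k unfolding A_def by auto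
      moreover have "T (1, k - 1) = Suc p + k" using T(2) k unfolding B_def by auto
      ultimately have "(0, p) = (1::nat, k - 1)"
        using syt_inj_cells[OF st, of "(0, p)" "(1, k - 1)"] k by auto
      then show False by simp
    qed
    have "card (sytset n k) = card A + card B" unfolding split using fA fB disj by (simp add: card_Un_disjoint)
    also have "\<dots> = fb n k" using fA fB fb_rec[of k p] less.prems p by simp
    finally show ?thesis using split fA fB by simp
  qed
qed

lemma syt_count_fb: "k \<le> n \<Longrightarrow> syt_count n k = fb n k"
  using syt_card unfolding syt_count_def sytset_def by simp

definition seqs :: "nat \<Rightarrow> nat list set" where
  "seqs M = {c. length c = M \<and> (\<forall>i<M. min (i + 2) M \<le> c ! i \<and> c ! i \<le> M) \<and>
                (\<forall>i j. i \<le> j \<longrightarrow> j < M \<longrightarrow> c ! i \<le> c ! j)}"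

definition st :: "nat list \<Rightarrow> nat" where
  "st c = card {(u, v). v < u \<and> u < length c \<and> u < c ! v \<and> c ! v < c ! u \<and> c ! Suc v = c ! u}"

definition wt :: "nat \<Rightarrow> nat list \<Rightarrow> nat" where
  "wt u c = st c + card {i. i < u \<and> i < length c \<and> c ! i = c ! 0}"

definition PP :: "nat \<Rightarrow> nat \<Rightarrow> nat \<Rightarrow> nat" where
  "PP M u k = card {c \<in> seqs M. u < c ! 0 \<and> wt u c = k}"

lemma finite_seqs: "finite (seqs M)"
proof -
  have "seqs M \<subseteq> {xs. set xs \<subseteq> {0..M} \<and> length xs = M}"
    unfolding seqs_def by (auto simp: in_set_conv_nth)
  moreover have "finite {xs. set xs \<subseteq> {0..M} \<and> length xs = M}"
    by (rule finite_lists_length_eq) simp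
  ultimately show ?thesis by (rule finite_subset)
qed

lemma seqs_cons_iff:
  assumes M: "1 \<le> M"
  shows "(x # map Suc c' \<in> seqs (Suc M)) \<longleftrightarrow> (c' \<in> seqs M \<and> 2 \<le> x \<and> x \<le> Suc (c' ! 0))"
proof
  assume a: "x # map Suc c' \<in> seqs (Suc M)"
  then have len: "length c' = M" unfolding seqs_def by simp
  have b: "\<forall>i<Suc M. min (i + 2) (Suc M) \<le> (x # map Suc c') ! i \<and> (x # map Suc c') ! i \<le> Suc M"
    and m: "\<forall>i j. i \<le> j \<longrightarrow> j < Suc M \<longrightarrow> (x # map Suc c') ! i \<le> (x # map Suc c') ! j"
    using a unfolding seqs_def by auto
  have "c' \<in> seqs M"
    unfolding seqs_def
  proof (intro CollectI conjI allI impI)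
    fix i assume i: "i < M"
    from b[rule_format, of "Suc i"] i len show "min (i + 2) M \<le> c' ! i" "c' ! i \<le> M" by auto
  next
    fix i j assume "i \<le> j" "j < M"
    then show "c' ! i \<le> c' ! j" using m[rule_format, of "Suc i" "Suc j"] len by auto
  qed (rule len)
  moreover have "2 \<le> x" using b[rule_format, of 0] M by auto
  moreover have "x \<le> Suc (c' ! 0)" using m[rule_format, of 0 1] M len by auto
  ultimately show "c' \<in> seqs M \<and> 2 \<le> x \<and> x \<le> Suc (c' ! 0)" by simp
next
  assume a: "c' \<in> seqs M \<and> 2 \<le> x \<and> x \<le> Suc (c' ! 0)"
  then have len: "length c' = M" and b: "\<forall>i<M. min (i + 2) M \<le> c' ! i \<and> c' ! i \<le> M"
    and m: "\<forall>i j. i \<le> j \<longrightarrow> j < M \<longrightarrow> c' ! i \<le> c' ! j" unfolding seqs_def by auto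
  show "x # map Suc c' \<in> seqs (Suc M)"
    unfolding seqs_def
  proof (intro CollectI conjI allI impI)
    show "length (x # map Suc c') = Suc M" using len by simp
  next
    fix i assume i: "i < Suc M"
    show "min (i + 2) (Suc M) \<le> (x # map Suc c') ! i"
    proof (cases i)
      case 0 then show ?thesis using a M by simp
    next
      case (Suc i') then show ?thesis using b[rule_format, of i'] i len by auto
    qed
    show "(x # map Suc c') ! i \<le> Suc M"
    proof (cases i)
      case 0 then show ?thesis using a b[rule_format, of 0] M by auto
    next
      case (Suc i') then show ?thesis using b[rule_format, of i'] i len by auto
    qed
  next
    fix i j assume ij: "i \<le> j" "j < Suc M"
    show "(x # map Suc c') ! i \<le> (x # map Suc c') ! j"
    proof (cases i)
      case 0
      then show ?thesis
      proof (cases j)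
        case 0 then show ?thesis using \<open>i = 0\<close> by simp
      next
        case (Suc j') then show ?thesis using \<open>i = 0\<close> a m[rule_format, of 0 j'] ij len by auto
      qed
    next
      case (Suc i')
      then obtain j' where "j = Suc j'" using ij by (cases j) auto
      then show ?thesis using Suc m[rule_format, of i' j'] ij len by auto
    qed
  qed
qed

lemma seqs_Suc_shape:
  assumes "c \<in> seqs (Suc M)" "1 \<le> M"
  shows "\<exists>x c'. c = x # map Suc c'"
proof -
  have len: "length c = Suc M" and b: "\<forall>i<Suc M. min (i + 2) (Suc M) \<le> c ! i"
    using assms unfolding seqs_def by auto
  obtain x r where c: "c = x # r" using len by (cases c) auto
  have "\<forall>y \<in> set r. 1 \<le> y"
  proof
    fix y assume "y \<in> set r"
    then obtain i where "i < length r" "r ! i = y" by (auto simp: in_set_conv_nth)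
    then show "1 \<le> y" using b[rule_format, of "Suc i"] c len by auto
  qed
  then have "r = map Suc (map (\<lambda>y. y - 1) r)" by (induction r) auto
  then show ?thesis using c by blast
qed

lemma seqs_mono: "c \<in> seqs M \<Longrightarrow> i \<le> j \<Longrightarrow> j < M \<Longrightarrow> c ! i \<le> c ! j"
  unfolding seqs_def by auto

lemma seqs_bnd: "c \<in> seqs M \<Longrightarrow> i < M \<Longrightarrow> min (i + 2) M \<le> c ! i \<and> c ! i \<le> M"
  unfolding seqs_def by auto

lemma seqs_len: "c \<in> seqs M \<Longrightarrow> length c = M"
  unfolding seqs_def by auto


definition stset :: "nat list \<Rightarrow> (nat \<times> nat) set" where
  "stset c = {(u, v). v < u \<and> u < length c \<and> u < c ! v \<and> c ! v < c ! u \<and> c ! Suc v = c ! u}"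

lemma st_stset: "st c = card (stset c)"
  unfolding st_def stset_def by simp

lemma finite_stset: "finite (stset c)"
proof -
  have "stset c \<subseteq> {..<length c} \<times> {..<length c}" unfolding stset_def by auto
  then show ?thesis by (rule finite_subset) simp
qed

lemma stset_cons:
  assumes c': "c' \<in> seqs M" "1 \<le> M" and x: "2 \<le> x" "x \<le> Suc (c' ! 0)"
  shows "stset (x # map Suc c') = (\<lambda>(a, b). (Suc a, Suc b)) ` stset c' \<union>
           (\<lambda>i. (Suc i, 0)) ` {i. i < M \<and> Suc i < x \<and> x < Suc (c' ! i) \<and> c' ! 0 = c' ! i}"
    (is "?L = ?A \<union> ?B")
proof (rule Set.set_eqI)
  fix p :: "nat \<times> nat"
  obtain u v where p: "p = (u, v)" by force
  have len: "length c' = M" using c' by (simp add: seqs_len)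
  show "p \<in> ?L \<longleftrightarrow> p \<in> ?A \<union> ?B"
  proof (cases v)
    case 0
    show ?thesis
    proof (cases u)
      case 0 then show ?thesis using p \<open>v = 0\<close> unfolding stset_def by auto
    next
      case (Suc a)
      have "p \<in> ?L \<longleftrightarrow> (a < M \<and> Suc a < x \<and> x < Suc (c' ! a) \<and> Suc (c' ! 0) = Suc (c' ! a))"
        unfolding stset_def p 0 Suc using len c'(2) by (auto simp: nth_Cons')
      also have "\<dots> \<longleftrightarrow> p \<in> ?B" unfolding p 0 Suc by auto
      finally show ?thesis unfolding p 0 Suc unfolding stset_def by auto
    qed
  next
    case (Suc b)
    show ?thesis
    proof (cases u)
      case 0 then show ?thesis using p Suc unfolding stset_def by auto
    next
      case (Suc a)
      have "p \<in> ?L \<longleftrightarrow> (b < a \<and> a < M \<and> a < c' ! b \<and> c' ! b < c' ! a \<and> c' ! Suc b = c' ! a)"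
        unfolding stset_def p \<open>v = Suc b\<close> Suc using len by auto
      also have "\<dots> \<longleftrightarrow> (a, b) \<in> stset c'" unfolding stset_def using len by auto
      also have "\<dots> \<longleftrightarrow> p \<in> ?A" unfolding p \<open>v = Suc b\<close> Suc by auto
      finally show ?thesis unfolding p \<open>v = Suc b\<close> Suc by auto
    qed
  qed
qed

lemma st_cons:
  assumes c': "c' \<in> seqs M" "1 \<le> M" and x: "2 \<le> x" "x \<le> Suc (c' ! 0)"
  shows "st (x # map Suc c') = st c' + (if x \<le> c' ! 0 then card {i. i < x - 1 \<and> i < M \<and> c' ! i = c' ! 0} else 0)"
proof -
  define Q where "Q = {i. i < M \<and> Suc i < x \<and> x < Suc (c' ! i) \<and> c' ! 0 = c' ! i}"
  have fQ: "finite Q" unfolding Q_def by auto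
  have disj: "(\<lambda>(a, b). (Suc a, Suc b)) ` stset c' \<inter> (\<lambda>i. (Suc i, 0)) ` Q = {}" by auto
  have inj1: "inj_on (\<lambda>(a, b). (Suc a, Suc b)) (stset c')" by (auto simp: inj_on_def)
  have inj2: "inj_on (\<lambda>i. (Suc i, 0::nat)) Q" by (auto simp: inj_on_def)
  have "st (x # map Suc c') = card (stset c') + card Q"
    unfolding st_stset stset_cons[OF assms] Q_def[symmetric]
    using disj inj1 inj2 fQ finite_stset by (simp add: card_Un_disjoint card_image)
  moreover have "Q = (if x \<le> c' ! 0 then {i. i < x - 1 \<and> i < M \<and> c' ! i = c' ! 0} else {})"
    unfolding Q_def by auto
  ultimately show ?thesis by (simp add: st_stset)
qed

definition pre :: "nat \<Rightarrow> nat list \<Rightarrow> nat" where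
  "pre u c = card {i. i < u \<and> i < length c \<and> c ! i = c ! 0}"

lemma wt_pre: "wt u c = st c + pre u c"
  unfolding wt_def pre_def by simp

lemma pre_nonmerge:
  assumes c': "c' \<in> seqs M" "1 \<le> M" and x: "x \<le> c' ! 0"
  shows "pre u (x # map Suc c') = (if u = 0 then 0 else 1)"
proof -
  have "{i. i < u \<and> i < length (x # map Suc c') \<and> (x # map Suc c') ! i = (x # map Suc c') ! 0} = (if u = 0 then {} else {0})"
  proof (rule Set.set_eqI)
    fix i
    show "i \<in> {i. i < u \<and> i < length (x # map Suc c') \<and> (x # map Suc c') ! i = (x # map Suc c') ! 0} \<longleftrightarrow> i \<in> (if u = 0 then {} else {0})"
    proof (cases i)
      case 0 then show ?thesis by auto
    next
      case (Suc i')
      have "i' < M \<Longrightarrow> c' ! 0 \<le> c' ! i'" using seqs_mono[OF c'(1), of 0 i'] by simp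
      then show ?thesis using Suc x seqs_len[OF c'(1)] by auto
    qed
  qed
  then show ?thesis unfolding pre_def by simp
qed

lemma pre_merge:
  assumes c': "c' \<in> seqs M" "1 \<le> M"
  shows "pre u (Suc (c' ! 0) # map Suc c') = (if u = 0 then 0 else Suc (pre (u - 1) c'))"
proof (cases u)
  case 0 then show ?thesis unfolding pre_def by simp
next
  case (Suc u')
  have len: "length c' = M" using c' by (simp add: seqs_len)
  have "{i. i < u \<and> i < length (Suc (c' ! 0) # map Suc c') \<and> (Suc (c' ! 0) # map Suc c') ! i = (Suc (c' ! 0) # map Suc c') ! 0}
        = insert 0 (Suc ` {i. i < u' \<and> i < length c' \<and> c' ! i = c' ! 0})"
  proof (rule Set.set_eqI)
    fix i show "i \<in> {i. i < u \<and> i < length (Suc (c' ! 0) # map Suc c') \<and> (Suc (c' ! 0) # map Suc c') ! i = (Suc (c' ! 0) # map Suc c') ! 0} \<longleftrightarrow> i \<in> insert 0 (Suc ` {i. i < u' \<and> i < length c' \<and> c' ! i = c' ! 0})"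
      using Suc by (cases i) auto
  qed
  moreover have "finite {i. i < u' \<and> i < length c' \<and> c' ! i = c' ! 0}" by auto
  ultimately show ?thesis unfolding pre_def using Suc by (simp add: card_image)
qed

lemma wt_nonmerge:
  assumes c': "c' \<in> seqs M" "1 \<le> M" and x: "2 \<le> x" "x \<le> c' ! 0"
  shows "wt u (x # map Suc c') = wt (x - 1) c' + (if u = 0 then 0 else 1)"
proof -
  have "pre (x - 1) c' = card {i. i < x - 1 \<and> i < M \<and> c' ! i = c' ! 0}"
    unfolding pre_def using seqs_len[OF c'(1)] by metis
  then show ?thesis unfolding wt_pre
    using st_cons[OF c' x(1)] pre_nonmerge[OF c' x(2)] x by simp
qed

lemma wt_merge:
  assumes c': "c' \<in> seqs M" "1 \<le> M"
  shows "wt u (Suc (c' ! 0) # map Suc c') = wt (u - 1) c' + (if u = 0 then 0 else 1)"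
proof -
  have c0: "1 \<le> c' ! 0" using seqs_bnd[OF c'(1), of 0] c'(2) by auto
  have "st (Suc (c' ! 0) # map Suc c') = st c'"
    using st_cons[OF c', of "Suc (c' ! 0)"] c0 by simp
  moreover have "pre 0 c' = 0" unfolding pre_def by simp
  ultimately show ?thesis unfolding wt_pre using pre_merge[OF c'] by simp
qed


lemma card_filter_sum: "finite A \<Longrightarrow> card {y \<in> A. P y} = (\<Sum>y\<in>A. (if P y then 1 else 0))"
  by (simp add: sum.inter_filter[symmetric])

lemma PP_split:
  assumes M: "1 \<le> M"
  shows "PP (Suc M) u k = (\<Sum>c'\<in>seqs M. card {x. 2 \<le> x \<and> x \<le> Suc (c' ! 0) \<and> u < x \<and> wt u (x # map Suc c') = k})"
proof -
  define X where "X c' = {x. 2 \<le> x \<and> x \<le> Suc (c' ! 0) \<and> u < x \<and> wt u (x # map Suc c') = k}" for c'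
  have eq: "{c \<in> seqs (Suc M). u < c ! 0 \<and> wt u c = k} = (\<lambda>(c', x). x # map Suc c') ` (SIGMA c':seqs M. X c')"
  proof (rule Set.set_eqI)
    fix c
    show "c \<in> {c \<in> seqs (Suc M). u < c ! 0 \<and> wt u c = k} \<longleftrightarrow> c \<in> (\<lambda>(c', x). x # map Suc c') ` (SIGMA c':seqs M. X c')"
    proof
      assume a: "c \<in> {c \<in> seqs (Suc M). u < c ! 0 \<and> wt u c = k}"
      then obtain x c' where c: "c = x # map Suc c'" using seqs_Suc_shape M by blast
      then have "c' \<in> seqs M \<and> 2 \<le> x \<and> x \<le> Suc (c' ! 0)" using a seqs_cons_iff[OF M] by simp
      then have "(c', x) \<in> (SIGMA c':seqs M. X c')" using a c unfolding X_def by simp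
      then show "c \<in> (\<lambda>(c', x). x # map Suc c') ` (SIGMA c':seqs M. X c')" using c by force
    next
      assume "c \<in> (\<lambda>(c', x). x # map Suc c') ` (SIGMA c':seqs M. X c')"
      then obtain c' x where "c' \<in> seqs M" "x \<in> X c'" "c = x # map Suc c'" by auto
      then show "c \<in> {c \<in> seqs (Suc M). u < c ! 0 \<and> wt u c = k}"
        using seqs_cons_iff[OF M] unfolding X_def by auto
    qed
  qed
  have inj: "inj_on (\<lambda>(c', x). x # map Suc c') (SIGMA c':seqs M. X c')"
    by (auto simp: inj_on_def)
  have fin: "\<forall>c'\<in>seqs M. finite (X c')" unfolding X_def by auto
  have "PP (Suc M) u k = card (SIGMA c':seqs M. X c')"
    unfolding PP_def eq using inj by (simp add: card_image)
  also have "\<dots> = (\<Sum>c'\<in>seqs M. card (X c'))"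
    using fin finite_seqs by (simp add: card_SigmaI)
  finally show ?thesis unfolding X_def .
qed

lemma per_seq:
  assumes c': "c' \<in> seqs M" "1 \<le> M" and uk: "u = 0 \<or> 1 \<le> k"
  shows "card {x. 2 \<le> x \<and> x \<le> Suc (c' ! 0) \<and> u < x \<and> wt u (x # map Suc c') = k}
       = card {y. u - 1 \<le> y \<and> y < c' ! 0 \<and> wt y c' = k - (if u = 0 then 0 else 1)}"
proof -
  define k' where "k' = k - (if u = 0 then 0 else 1)"
  have kk: "k = k' + (if u = 0 then 0 else 1)" unfolding k'_def using uk by auto
  define f where "f y = (if y = u - 1 then Suc (c' ! 0) else Suc y)" for y
  have c0: "1 \<le> c' ! 0" using seqs_bnd[OF c'(1), of 0] c'(2) by auto
  have "bij_betw f {y. u - 1 \<le> y \<and> y < c' ! 0 \<and> wt y c' = k'}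
                    {x. 2 \<le> x \<and> x \<le> Suc (c' ! 0) \<and> u < x \<and> wt u (x # map Suc c') = k}"
    unfolding bij_betw_def
  proof (intro conjI)
    show "inj_on f {y. u - 1 \<le> y \<and> y < c' ! 0 \<and> wt y c' = k'}"
      unfolding inj_on_def f_def by auto
  next
    show "f ` {y. u - 1 \<le> y \<and> y < c' ! 0 \<and> wt y c' = k'} =
          {x. 2 \<le> x \<and> x \<le> Suc (c' ! 0) \<and> u < x \<and> wt u (x # map Suc c') = k}"
    proof (rule Set.set_eqI)
      fix x
      show "x \<in> f ` {y. u - 1 \<le> y \<and> y < c' ! 0 \<and> wt y c' = k'} \<longleftrightarrow>
            x \<in> {x. 2 \<le> x \<and> x \<le> Suc (c' ! 0) \<and> u < x \<and> wt u (x # map Suc c') = k}"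
      proof
        assume "x \<in> f ` {y. u - 1 \<le> y \<and> y < c' ! 0 \<and> wt y c' = k'}"
        then obtain y where y: "u - 1 \<le> y" "y < c' ! 0" "wt y c' = k'" "x = f y" by auto
        show "x \<in> {x. 2 \<le> x \<and> x \<le> Suc (c' ! 0) \<and> u < x \<and> wt u (x # map Suc c') = k}"
        proof (cases "y = u - 1")
          case True
          then have "x = Suc (c' ! 0)" using y unfolding f_def by simp
          moreover have "wt u (Suc (c' ! 0) # map Suc c') = k"
            using wt_merge[OF c', of u] True y kk by simp
          ultimately show ?thesis using c0 y True by auto
        next
          case False
          then have x: "x = Suc y" using y unfolding f_def by simp
          have yu: "u \<le> y" "1 \<le> y" using False y(1) by auto
          have "wt u (Suc y # map Suc c') = wt y c' + (if u = 0 then 0 else 1)"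
            using wt_nonmerge[OF c', of "Suc y" u] yu y(2) by simp
          then show ?thesis using x yu y kk by auto
        qed
      next
        assume "x \<in> {x. 2 \<le> x \<and> x \<le> Suc (c' ! 0) \<and> u < x \<and> wt u (x # map Suc c') = k}"
        then have x: "2 \<le> x" "x \<le> Suc (c' ! 0)" "u < x" "wt u (x # map Suc c') = k" by auto
        show "x \<in> f ` {y. u - 1 \<le> y \<and> y < c' ! 0 \<and> wt y c' = k'}"
        proof (cases "x = Suc (c' ! 0)")
          case True
          have "wt (u - 1) c' = k'" using wt_merge[OF c', of u] x(4) True kk by simp
          moreover have "u - 1 < c' ! 0" using x(3) True c0 by auto
          ultimately show ?thesis using True unfolding f_def by (intro image_eqI[of _ _ "u - 1"]) auto
        next
          case False
          have "wt (x - 1) c' = k'" using wt_nonmerge[OF c', of x u] x False kk by simp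
          moreover have "x - 1 \<noteq> u - 1" using x(1,3) by auto
          ultimately show ?thesis using False x unfolding f_def by (intro image_eqI[of _ _ "x - 1"]) auto
        qed
      qed
    qed
  qed
  then show ?thesis unfolding k'_def by (simp add: bij_betw_same_card)
qed

lemma PP_rec:
  assumes M: "1 \<le> M" and uk: "u = 0 \<or> 1 \<le> k"
  shows "PP (Suc M) u k = (\<Sum>y\<in>{u - 1..<M}. PP M y (k - (if u = 0 then 0 else 1)))"
proof -
  define k' where "k' = k - (if u = 0 then 0 else 1)"
  have "PP (Suc M) u k = (\<Sum>c'\<in>seqs M. card {y. u - 1 \<le> y \<and> y < c' ! 0 \<and> wt y c' = k'})"
    unfolding PP_split[OF M] k'_def using per_seq[OF _ M uk] by simp
  also have "\<dots> = (\<Sum>c'\<in>seqs M. \<Sum>y\<in>{u - 1..<M}. (if y < c' ! 0 \<and> wt y c' = k' then 1 else 0))"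
  proof (rule sum.cong[OF refl])
    fix c' assume c': "c' \<in> seqs M"
    have "c' ! 0 \<le> M" using seqs_bnd[OF c', of 0] M by auto
    then have "{y. u - 1 \<le> y \<and> y < c' ! 0 \<and> wt y c' = k'} = {y \<in> {u - 1..<M}. y < c' ! 0 \<and> wt y c' = k'}"
      by auto
    then show "card {y. u - 1 \<le> y \<and> y < c' ! 0 \<and> wt y c' = k'} = (\<Sum>y\<in>{u - 1..<M}. (if y < c' ! 0 \<and> wt y c' = k' then 1 else 0))"
      using card_filter_sum[of "{u - 1..<M}" "\<lambda>y. y < c' ! 0 \<and> wt y c' = k'"] by simp
  qed
  also have "\<dots> = (\<Sum>y\<in>{u - 1..<M}. \<Sum>c'\<in>seqs M. (if y < c' ! 0 \<and> wt y c' = k' then 1 else 0))"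
    by (rule sum.swap)
  also have "\<dots> = (\<Sum>y\<in>{u - 1..<M}. PP M y k')"
  proof (rule sum.cong[OF refl])
    fix y
    show "(\<Sum>c'\<in>seqs M. (if y < c' ! 0 \<and> wt y c' = k' then 1 else 0)) = PP M y k'"
      unfolding PP_def using finite_seqs by (simp add: card_filter_sum)
  qed
  finally show ?thesis unfolding k'_def .
qed

lemma PP_u_0: "1 \<le> u \<Longrightarrow> 1 \<le> M \<Longrightarrow> PP M u 0 = 0"
proof -
  assume u: "1 \<le> u" and M1: "1 \<le> M"
  have "\<And>c. c \<in> seqs M \<Longrightarrow> u < c ! 0 \<Longrightarrow> wt u c \<noteq> 0"
  proof -
    fix c assume c: "c \<in> seqs M" "u < c ! 0"
    have "M \<noteq> 0" using M1 by simp
    then have "0 \<in> {i. i < u \<and> i < length c \<and> c ! i = c ! 0}" using u seqs_len[OF c(1)] by auto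
    moreover have "finite {i. i < u \<and> i < length c \<and> c ! i = c ! 0}" by auto
    ultimately have "pre u c \<noteq> 0" unfolding pre_def by (metis card_0_eq empty_iff)
    then show "wt u c \<noteq> 0" unfolding wt_pre by simp
  qed
  then show ?thesis unfolding PP_def by (metis (mono_tags, lifting) card.empty empty_Collect_eq)
qed

lemma seqs_2: "seqs 2 = {[2, 2]}"
proof (rule Set.set_eqI)
  fix c
  show "c \<in> seqs 2 \<longleftrightarrow> c \<in> {[2, 2]}"
  proof
    assume c: "c \<in> seqs 2"
    then have "length c = 2" by (rule seqs_len)
    then obtain a b where ab: "c = [a, b]" by (metis (no_types, opaque_lifting) length_0_conv length_Suc_conv numeral_2_eq_2)
    have "a = 2" "b = 2" using seqs_bnd[OF c, of 0] seqs_bnd[OF c, of 1] ab by auto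
    then show "c \<in> {[2, 2]}" using ab by simp
  next
    assume "c \<in> {[2, 2]}"
    then show "c \<in> seqs 2" unfolding seqs_def by (auto simp: less_2_cases_iff nth_Cons')
  qed
qed

lemma sum_rev_fb:
  "(\<Sum>y\<in>{a..<M'}. (if y \<le> k' \<and> k' < M' then fb p (k' - y) else 0)) =
   (if a \<le> k' \<and> k' < M' then (\<Sum>i\<le>k' - a. fb p i) else 0)"
proof (cases "a \<le> k' \<and> k' < M'")
  case True
  have "(\<Sum>y\<in>{a..<M'}. (if y \<le> k' \<and> k' < M' then fb p (k' - y) else 0)) = (\<Sum>y\<in>{a..k'}. fb p (k' - y))"
  proof -
    have "(\<Sum>y\<in>{a..<M'}. (if y \<le> k' \<and> k' < M' then fb p (k' - y) else 0)) =
          (\<Sum>y\<in>{y \<in> {a..<M'}. y \<le> k'}. fb p (k' - y))"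
      using True by (simp add: sum.inter_filter[symmetric])
    moreover have "{y \<in> {a..<M'}. y \<le> k'} = {a..k'}" using True by auto
    ultimately show ?thesis by simp
  qed
  also have "\<dots> = (\<Sum>i\<le>k' - a. fb p i)"
    by (rule sum.reindex_bij_witness[of _ "\<lambda>i. k' - i" "\<lambda>y. k' - y"]) (use True in auto)
  finally show ?thesis using True by simp
next
  case False
  then have "\<forall>y\<in>{a..<M'}. \<not> (y \<le> k' \<and> k' < M')" by auto
  then have "(\<Sum>y\<in>{a..<M'}. (if y \<le> k' \<and> k' < M' then fb p (k' - y) else 0)) = 0"
    by (intro sum.neutral) auto
  then show ?thesis by (simp only: if_not_P[OF False])
qed

lemma PP_closed: "2 \<le> M \<Longrightarrow> PP M u k = (if u \<le> k \<and> k < M then fb (M - 2) (k - u) else 0)"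
proof (induction M arbitrary: u k rule: dec_induct)
  case base
  have w: "wt u [2, 2] = min u 2"
  proof -
    have "stset [2, 2] = {}" unfolding stset_def by (auto simp: less_2_cases_iff nth_Cons')
    moreover have "{i. i < u \<and> i < length [2::nat, 2] \<and> [2::nat, 2] ! i = [2::nat, 2] ! 0} = {..<min u 2}"
      by (auto simp: less_2_cases_iff nth_Cons')
    ultimately show ?thesis unfolding wt_pre pre_def st_stset by simp
  qed
  have "PP 2 u k = card {c \<in> {[2, 2]}. u < c ! 0 \<and> wt u c = k}" unfolding PP_def seqs_2 by simp
  also have "\<dots> = (if u < 2 \<and> k = u then 1 else 0)"
  proof -
    have "{c \<in> {[2, 2]}. u < c ! 0 \<and> wt u c = k} = (if u < 2 \<and> k = u then {[2, 2]} else {})"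
      using w by auto
    then show ?thesis by simp
  qed
  also have "\<dots> = (if u \<le> k \<and> k < 2 then fb (2 - 2) (k - u) else 0)" by auto
  finally show ?case .
next
  case (step M)
  show ?case
  proof (cases "u = 0 \<or> 1 \<le> k")
    case True
    define k' where "k' = k - (if u = 0 then 0 else 1)"
    have "PP (Suc M) u k = (\<Sum>y\<in>{u - 1..<M}. PP M y k')"
      unfolding k'_def using PP_rec[of M u k] step True by simp
    also have "\<dots> = (\<Sum>y\<in>{u - 1..<M}. (if y \<le> k' \<and> k' < M then fb (M - 2) (k' - y) else 0))"
      using step.IH by simp
    also have "\<dots> = (if u - 1 \<le> k' \<and> k' < M then (\<Sum>i\<le>k' - (u - 1). fb (M - 2) i) else 0)"
      by (rule sum_rev_fb)
    also have "\<dots> = (if u \<le> k \<and> k < Suc M then fb (Suc M - 2) (k - u) else 0)"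
    proof -
      obtain q where q: "M - 2 = q" "Suc M - 2 = Suc q" using step.hyps by (metis Suc_diff_le diff_Suc_Suc)
      show ?thesis
      proof (cases "u = 0")
        case True
        then show ?thesis unfolding k'_def q using q step.hyps fb_zero[of "Suc q" M] by auto
      next
        case False
        then show ?thesis unfolding k'_def q using q step.hyps True by auto
      qed
    qed
    finally show ?thesis .
  next
    case False
    then have "k = 0" "1 \<le> u" by auto
    then show ?thesis using PP_u_0[of u "Suc M"] by auto
  qed
qed

lemma mult_entry:
  assumes "A \<in> carrier_mat a b" "B \<in> carrier_mat b c" "i < a" "j < c"
  shows "(A * B) $$ (i, j) = (\<Sum>k<b. A $$ (i, k) * B $$ (k, j))"
proof -
  have d: "dim_row A = a" "dim_col A = b" "dim_row B = b" "dim_col B = c" using assms(1,2) by auto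
  have "(A * B) $$ (i, j) = row A i \<bullet> col B j" using assms(3,4) d by simp
  also have "\<dots> = (\<Sum>k\<in>{0..<b}. row A i $ k * col B j $ k)" unfolding scalar_prod_def using d by simp
  also have "\<dots> = (\<Sum>k<b. A $$ (i, k) * B $$ (k, j))"
    unfolding atLeast0LessThan using d assms(3,4) by (intro sum.cong) auto
  finally show ?thesis .
qed

lemma sum_delta_idx:
  assumes d: "distinct xs"
  shows "(\<Sum>r<length xs. (if xs ! r = a then f r else 0)) =
         (if a \<in> set xs then f (THE r. r < length xs \<and> xs ! r = a) else (0::'a::comm_monoid_add))"
proof (cases "a \<in> set xs")
  case True
  then obtain r0 where r0: "r0 < length xs" "xs ! r0 = a" by (auto simp: in_set_conv_nth)
  have iff: "\<And>r. r < length xs \<Longrightarrow> (xs ! r = a) = (r = r0)"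
  proof -
    fix r assume r: "r < length xs"
    have "(xs ! r = a) = (xs ! r = xs ! r0)" using r0 by simp
    also have "\<dots> = (r = r0)" by (rule nth_eq_iff_index_eq[OF d r r0(1)])
    finally show "(xs ! r = a) = (r = r0)" .
  qed
  have th: "(THE r. r < length xs \<and> xs ! r = a) = r0"
  proof (rule the_equality)
    show "r0 < length xs \<and> xs ! r0 = a" using r0 by simp
  next
    fix r assume "r < length xs \<and> xs ! r = a"
    then show "r = r0" using iff by blast
  qed
  have "(\<Sum>r<length xs. (if xs ! r = a then f r else 0)) = (\<Sum>r<length xs. (if r = r0 then f r else 0))"
  proof (rule sum.cong[OF refl])
    fix r assume "r \<in> {..<length xs}"
    then have "(xs ! r = a) = (r = r0)" using iff by simp
    then show "(if xs ! r = a then f r else 0) = (if r = r0 then f r else 0)" by simp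
  qed
  also have "\<dots> = f r0" using r0(1) by (simp add: sum.delta)
  finally show ?thesis using True th by simp
next
  case False
  have "(\<Sum>r<length xs. (if xs ! r = a then f r else 0)) = 0"
  proof (rule sum.neutral, rule ballI)
    fix r assume "r \<in> {..<length xs}"
    then have "xs ! r \<noteq> a" using False nth_mem by fastforce
    then show "(if xs ! r = a then f r else 0) = 0" by simp
  qed
  then show ?thesis using False by simp
qed

locale nak =
  fixes m :: nat and I :: "(nat \<times> nat) set"
  assumes ideal: "lin_nak_ideal m I"
begin

lemma I_sub: "(i, j) \<in> I \<Longrightarrow> i + 2 \<le> j \<and> j < m"
  using ideal unfolding lin_nak_ideal_def by auto

lemma I_ext: "(i, j) \<in> I \<Longrightarrow> i' \<le> i \<Longrightarrow> j \<le> j' \<Longrightarrow> j' < m \<Longrightarrow> (i', j') \<in> I"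
  using ideal unfolding lin_nak_ideal_def by blast

definition cc :: "nat \<Rightarrow> nat" where
  "cc i = (LEAST j. j = m \<or> (i, j) \<in> I)"

lemma cc_le: "cc i \<le> m"
  unfolding cc_def by (rule Least_le) simp

lemma cc_lt_in: "cc i < m \<Longrightarrow> (i, cc i) \<in> I"
proof -
  assume a: "cc i < m"
  have "cc i = m \<or> (i, cc i) \<in> I" unfolding cc_def by (rule LeastI[of _ m]) simp
  then show ?thesis using a by simp
qed

lemma I_iff: "j < m \<Longrightarrow> (i, j) \<in> I \<longleftrightarrow> cc i \<le> j"
proof
  assume "(i, j) \<in> I" then show "cc i \<le> j" unfolding cc_def by (intro Least_le) simp
next
  assume a: "j < m" "cc i \<le> j"
  then have "(i, cc i) \<in> I" using cc_lt_in by simp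
  then show "(i, j) \<in> I" using I_ext a by blast
qed

lemma cc_ge: "cc i < m \<Longrightarrow> i + 2 \<le> cc i"
  using cc_lt_in I_sub by blast

lemma cc_mono: "i \<le> i' \<Longrightarrow> cc i \<le> cc i'"
proof (cases "cc i' < m")
  case True
  assume "i \<le> i'"
  then have "(i, cc i') \<in> I" using I_ext cc_lt_in[OF True] True by blast
  then show ?thesis unfolding cc_def by (intro Least_le) simp
next
  case False
  then show ?thesis using cc_le[of i] cc_le[of i'] by simp
qed

lemma cc_gt: "i < m \<Longrightarrow> i < cc i"
  using cc_ge[of i] cc_le[of i] by (cases "cc i < m") auto

definition S :: "nat \<Rightarrow> nat set" where
  "S j = set (jbasis I j)"

lemma mem_S: "j < m \<Longrightarrow> x \<in> S j \<longleftrightarrow> x < j \<and> j < cc x"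
  unfolding S_def jbasis_def using I_iff by auto

lemma jb_distinct: "distinct (jbasis I j)"
  unfolding jbasis_def by simp

definition jsrc :: "nat \<Rightarrow> nat \<Rightarrow> nat" where
  "jsrc j r = jbasis I j ! r"

definition jpos :: "nat \<Rightarrow> nat \<Rightarrow> nat" where
  "jpos j x = (THE r. r < length (jbasis I j) \<and> jbasis I j ! r = x)"

lemma jpos_props:
  assumes "x \<in> S j"
  shows "jpos j x < jdim I j" "jsrc j (jpos j x) = x"
proof -
  obtain r0 where r0: "r0 < length (jbasis I j)" "jbasis I j ! r0 = x"
    using assms unfolding S_def by (auto simp: in_set_conv_nth)
  have u: "\<And>r. r < length (jbasis I j) \<Longrightarrow> jbasis I j ! r = x \<Longrightarrow> r = r0"
  proof -
    fix r assume "r < length (jbasis I j)" "jbasis I j ! r = x"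
    then show "r = r0" using nth_eq_iff_index_eq[OF jb_distinct, of r j r0] r0 by simp
  qed
  have "jpos j x = r0" unfolding jpos_def
  proof (rule the_equality)
    show "r0 < length (jbasis I j) \<and> jbasis I j ! r0 = x" using r0 by simp
  next
    fix r assume "r < length (jbasis I j) \<and> jbasis I j ! r = x"
    then show "r = r0" using u by blast
  qed
  then show "jpos j x < jdim I j" "jsrc j (jpos j x) = x" using r0 unfolding jdim_def jsrc_def by auto
qed

lemma jsrc_in: "r < jdim I j \<Longrightarrow> jsrc j r \<in> S j"
  unfolding jsrc_def S_def jdim_def by simp

lemma jpos_jsrc: "r < jdim I j \<Longrightarrow> jpos j (jsrc j r) = r"
proof -
  assume r: "r < jdim I j"
  have u: "\<And>r'. r' < length (jbasis I j) \<Longrightarrow> jbasis I j ! r' = jbasis I j ! r \<Longrightarrow> r' = r"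
  proof -
    fix r' assume "r' < length (jbasis I j)" "jbasis I j ! r' = jbasis I j ! r"
    then show "r' = r" using nth_eq_iff_index_eq[OF jb_distinct, of r' j r] r by (simp add: jdim_def)
  qed
  show ?thesis unfolding jpos_def jsrc_def
  proof (rule the_equality)
    show "r < length (jbasis I j) \<and> jbasis I j ! r = jbasis I j ! r" using r by (simp add: jdim_def)
  next
    fix r' assume "r' < length (jbasis I j) \<and> jbasis I j ! r' = jbasis I j ! r"
    then show "r' = r" using u by blast
  qed
qed

lemma jsrc_inj: "r < jdim I j \<Longrightarrow> r' < jdim I j \<Longrightarrow> jsrc j r = jsrc j r' \<Longrightarrow> r = r'"
  using nth_eq_iff_index_eq[OF jb_distinct, of r j r'] unfolding jsrc_def jdim_def by simp

lemma jpos_inj: "x \<in> S j \<Longrightarrow> y \<in> S j \<Longrightarrow> jpos j x = jpos j y \<Longrightarrow> x = y"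
proof -
  assume a: "x \<in> S j" "y \<in> S j" "jpos j x = jpos j y"
  have "x = jsrc j (jpos j x)" using jpos_props(2)[OF a(1)] by simp
  also have "\<dots> = y" using a(3) jpos_props(2)[OF a(2)] by simp
  finally show "x = y" .
qed

lemma sum_delta_jb:
  "(\<Sum>r<jdim I j. (if jsrc j r = a then f r else 0)) = (if a \<in> S j then f (jpos j a) else (0::'a::comm_monoid_add))"
  using sum_delta_idx[OF jb_distinct, of j a f] unfolding jdim_def jsrc_def S_def jpos_def by simp

lemma jmap_carrier: "jmap I j \<in> carrier_mat (jdim I (Suc j)) (jdim I j)"
  unfolding jmap_def by simp

lemma jmap_entry: "r < jdim I (Suc j) \<Longrightarrow> s < jdim I j \<Longrightarrow>
  (jmap I j :: 'k::field mat) $$ (r, s) = (if jsrc (Suc j) r = jsrc j s then 1 else 0)"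
  unfolding jmap_def jsrc_def by simp

lemma pmap_carrier: "(\<forall>j. f j \<in> carrier_mat (d (Suc j)) (d j)) \<Longrightarrow> pmap d f i l \<in> carrier_mat (d (i + l)) (d i)"
proof (induction l)
  case 0
  then show ?case by simp
next
  case (Suc l)
  have "f (i + l) \<in> carrier_mat (d (Suc (i + l))) (d (i + l))" using Suc.prems by simp
  moreover have "pmap d f i l \<in> carrier_mat (d (i + l)) (d i)" using Suc by simp
  ultimately have "f (i + l) * pmap d f i l \<in> carrier_mat (d (Suc (i + l))) (d i)"
    by (rule mult_carrier_mat)
  then show ?case by simp
qed

lemma P_carrier: "(pmap (jdim I) (jmap I) i l :: 'k::field mat) \<in> carrier_mat (jdim I (i + l)) (jdim I i)"
  by (rule pmap_carrier) (simp add: jmap_carrier)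

lemma P_entry:
  assumes "a + l < m" "r < jdim I (a + l)" "s < jdim I a"
  shows "(pmap (jdim I) (jmap I) a l :: 'k::field mat) $$ (r, s) = (if jsrc (a + l) r = jsrc a s then 1 else 0)"
  using assms
proof (induction l arbitrary: r)
  case 0
  then show ?case using jsrc_inj[of r a s] by auto
next
  case (Suc l)
  let ?x = "jsrc (Suc (a + l)) r"
  have "(pmap (jdim I) (jmap I) a (Suc l) :: 'k mat) $$ (r, s) =
        ((jmap I (a + l) :: 'k mat) * pmap (jdim I) (jmap I) a l) $$ (r, s)" by simp
  also have "\<dots> = (\<Sum>k<jdim I (a + l). (jmap I (a + l) :: 'k mat) $$ (r, k) * (pmap (jdim I) (jmap I) a l :: 'k mat) $$ (k, s))"
    using Suc.prems by (intro mult_entry[OF jmap_carrier P_carrier]) auto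
  also have "\<dots> = (\<Sum>k<jdim I (a + l). (if jsrc (a + l) k = ?x then (if ?x = jsrc a s then 1 else 0) else 0))"
  proof (rule sum.cong[OF refl])
    fix k assume k: "k \<in> {..<jdim I (a + l)}"
    have ih: "(pmap (jdim I) (jmap I) a l :: 'k mat) $$ (k, s) = (if jsrc (a + l) k = jsrc a s then 1 else 0)"
      using Suc.prems k by (intro Suc.IH) auto
    have je: "(jmap I (a + l) :: 'k mat) $$ (r, k) = (if ?x = jsrc (a + l) k then 1 else 0)"
      using Suc.prems k by (intro jmap_entry) auto
    show "(jmap I (a + l) :: 'k mat) $$ (r, k) * (pmap (jdim I) (jmap I) a l :: 'k mat) $$ (k, s) =
          (if jsrc (a + l) k = ?x then (if ?x = jsrc a s then 1 else 0) else 0)"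
      unfolding ih je by auto
  qed
  also have "\<dots> = (if ?x \<in> S (a + l) then (if ?x = jsrc a s then 1 else 0) else 0)"
    by (rule sum_delta_jb)
  also have "\<dots> = (if ?x = jsrc a s then 1 else 0)"
  proof -
    have "?x = jsrc a s \<Longrightarrow> ?x \<in> S (a + l)"
    proof -
      assume e: "?x = jsrc a s"
      have x1: "?x \<in> S (Suc (a + l))" using Suc.prems by (intro jsrc_in) simp
      have x2: "?x \<in> S a" using e Suc.prems by (simp add: jsrc_in)
      have m1: "Suc (a + l) < m" "a < m" "a + l < m" using Suc.prems by auto
      have "?x < Suc (a + l) \<and> Suc (a + l) < cc ?x" using x1 mem_S[OF m1(1)] by blast
      moreover have "?x < a \<and> a < cc ?x" using x2 mem_S[OF m1(2)] by blast
      ultimately show "?x \<in> S (a + l)" using mem_S[OF m1(3)] by simp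
    qed
    then show ?thesis by auto
  qed
  finally show ?case by (simp only: add_Suc_right)
qed

lemma P_zero:
  assumes "(i, j) \<in> I"
  shows "(pmap (jdim I) (jmap I) i (j - i) :: 'k::field mat) = 0\<^sub>m (jdim I j) (jdim I i)"
proof -
  have ij: "i + 2 \<le> j" "j < m" using I_sub assms by auto
  have ij2: "i + (j - i) = j" using ij by simp
  show ?thesis
  proof (rule eq_matI)
    fix r s assume rs: "r < dim_row (0\<^sub>m (jdim I j) (jdim I i) :: 'k mat)" "s < dim_col (0\<^sub>m (jdim I j) (jdim I i) :: 'k mat)"
    then have rs': "r < jdim I (i + (j - i))" "s < jdim I i" using ij2 by auto
    have "jsrc j r \<noteq> jsrc i s"
    proof
      assume e: "jsrc j r = jsrc i s"
      have "jsrc i s \<in> S i" using rs' by (simp add: jsrc_in)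
      then have "jsrc i s < i" using mem_S ij by auto
      moreover have "jsrc j r \<in> S j" using rs' ij2 by (simp add: jsrc_in)
      then have "j < cc (jsrc j r)" using mem_S ij by auto
      moreover have "cc i \<le> j" using assms I_iff ij by auto
      ultimately show False using e cc_mono[of "jsrc i s" i] by auto
    qed
    then show "(pmap (jdim I) (jmap I) i (j - i) :: 'k mat) $$ (r, s) = 0\<^sub>m (jdim I j) (jdim I i) $$ (r, s)"
      using P_entry[of i "j - i" r s] rs' ij ij2 by simp
  next
    show "dim_row (pmap (jdim I) (jmap I) i (j - i) :: 'k mat) = dim_row (0\<^sub>m (jdim I j) (jdim I i) :: 'k mat)"
      using P_carrier[of i "j - i"] ij2 by auto
    show "dim_col (pmap (jdim I) (jmap I) i (j - i) :: 'k mat) = dim_col (0\<^sub>m (jdim I j) (jdim I i) :: 'k mat)"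
      using P_carrier[of i "j - i"] by auto
  qed
qed

end

context nak begin

definition Hm :: "(nat \<Rightarrow> nat \<Rightarrow> nat \<Rightarrow> 'k::field) \<Rightarrow> nat \<Rightarrow> 'k mat" where
  "Hm hc j = hmat (jdim I) (jdim I) hc j"

definition Em :: "(nat \<Rightarrow> nat \<Rightarrow> nat \<Rightarrow> 'k::field) \<Rightarrow> nat \<Rightarrow> 'k mat" where
  "Em hc j = four_block_mat (jmap I j) (Hm hc j) (0\<^sub>m (jdim I (Suc j)) (jdim I j)) (jmap I j)"

fun Xm :: "(nat \<Rightarrow> nat \<Rightarrow> nat \<Rightarrow> 'k::field) \<Rightarrow> nat \<Rightarrow> nat \<Rightarrow> 'k mat" where
  "Xm hc i 0 = 0\<^sub>m (jdim I i) (jdim I i)"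
| "Xm hc i (Suc l) = jmap I (i + l) * Xm hc i l + Hm hc (i + l) * pmap (jdim I) (jmap I) i l"

lemma Hm_carrier: "Hm hc j \<in> carrier_mat (jdim I (Suc j)) (jdim I j)"
  unfolding Hm_def hmat_def by simp

lemma Hm_entry: "r < jdim I (Suc j) \<Longrightarrow> s < jdim I j \<Longrightarrow> Hm hc j $$ (r, s) = hc j r s"
  unfolding Hm_def hmat_def by simp

lemma Xm_carrier: "Xm hc i l \<in> carrier_mat (jdim I (i + l)) (jdim I i)"
proof (induction l)
  case 0 then show ?case by simp
next
  case (Suc l)
  have a: "jmap I (i + l) * Xm hc i l \<in> carrier_mat (jdim I (Suc (i + l))) (jdim I i)"
    using jmap_carrier Suc by (rule mult_carrier_mat)
  have b: "Hm hc (i + l) * pmap (jdim I) (jmap I) i l \<in> carrier_mat (jdim I (Suc (i + l))) (jdim I i)"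
    using Hm_carrier P_carrier by (rule mult_carrier_mat)
  show ?case using a b by simp
qed

lemma pmapE:
  "pmap (\<lambda>j. jdim I j + jdim I j) (Em hc) i l =
   four_block_mat (pmap (jdim I) (jmap I) i l) (Xm hc i l) (0\<^sub>m (jdim I (i + l)) (jdim I i)) (pmap (jdim I) (jmap I) i l)"
proof (induction l)
  case 0
  then show ?case by simp
next
  case (Suc l)
  let ?P = "pmap (jdim I) (jmap I) i l :: 'a mat"
  let ?J = "jmap I (i + l) :: 'a mat"
  let ?H = "Hm hc (i + l)"
  let ?X = "Xm hc i l"
  have cJ: "?J \<in> carrier_mat (jdim I (Suc (i + l))) (jdim I (i + l))" by (rule jmap_carrier)
  have cH: "?H \<in> carrier_mat (jdim I (Suc (i + l))) (jdim I (i + l))" by (rule Hm_carrier)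
  have cP: "?P \<in> carrier_mat (jdim I (i + l)) (jdim I i)" by (rule P_carrier)
  have cX: "?X \<in> carrier_mat (jdim I (i + l)) (jdim I i)" by (rule Xm_carrier)
  have c0: "(0\<^sub>m (jdim I (Suc (i + l))) (jdim I (i + l)) :: 'a mat) \<in> carrier_mat (jdim I (Suc (i + l))) (jdim I (i + l))" by simp
  have c0': "(0\<^sub>m (jdim I (i + l)) (jdim I i) :: 'a mat) \<in> carrier_mat (jdim I (i + l)) (jdim I i)" by simp
  have "pmap (\<lambda>j. jdim I j + jdim I j) (Em hc) i (Suc l) =
        Em hc (i + l) * pmap (\<lambda>j. jdim I j + jdim I j) (Em hc) i l" by simp
  also have "\<dots> = four_block_mat ?J ?H (0\<^sub>m (jdim I (Suc (i + l))) (jdim I (i + l))) ?J *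
                  four_block_mat ?P ?X (0\<^sub>m (jdim I (i + l)) (jdim I i)) ?P"
    unfolding Suc Em_def by simp
  also have "\<dots> = four_block_mat (?J * ?P + ?H * 0\<^sub>m (jdim I (i + l)) (jdim I i)) (?J * ?X + ?H * ?P)
      (0\<^sub>m (jdim I (Suc (i + l))) (jdim I (i + l)) * ?P + ?J * 0\<^sub>m (jdim I (i + l)) (jdim I i))
      (0\<^sub>m (jdim I (Suc (i + l))) (jdim I (i + l)) * ?X + ?J * ?P)"
    by (rule mult_four_block_mat[OF cJ cH c0 cJ cP cX c0' cP])
  also have "\<dots> = four_block_mat (?J * ?P) (?J * ?X + ?H * ?P) (0\<^sub>m (jdim I (Suc (i + l))) (jdim I i)) (?J * ?P)"
  proof -
    have JP: "?J * ?P \<in> carrier_mat (jdim I (Suc (i + l))) (jdim I i)" using cJ cP by (rule mult_carrier_mat)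
    have e1: "?H * 0\<^sub>m (jdim I (i + l)) (jdim I i) = 0\<^sub>m (jdim I (Suc (i + l))) (jdim I i)"
      using cH by (rule right_mult_zero_mat)
    have e2: "?J * 0\<^sub>m (jdim I (i + l)) (jdim I i) = 0\<^sub>m (jdim I (Suc (i + l))) (jdim I i)"
      using cJ by (rule right_mult_zero_mat)
    have e3: "0\<^sub>m (jdim I (Suc (i + l))) (jdim I (i + l)) * ?P = (0\<^sub>m (jdim I (Suc (i + l))) (jdim I i) :: 'a mat)"
      using cP by (rule left_mult_zero_mat)
    have e4: "0\<^sub>m (jdim I (Suc (i + l))) (jdim I (i + l)) * ?X = (0\<^sub>m (jdim I (Suc (i + l))) (jdim I i) :: 'a mat)"
      using cX by (rule left_mult_zero_mat)
    show ?thesis unfolding e1 e2 e3 e4 using JP by simp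
  qed
  also have "\<dots> = four_block_mat (pmap (jdim I) (jmap I) i (Suc l)) (Xm hc i (Suc l))
                     (0\<^sub>m (jdim I (i + Suc l)) (jdim I i)) (pmap (jdim I) (jmap I) i (Suc l))"
    by simp
  finally show ?case .
qed

lemma four_block_zero_B:
  assumes "A \<in> carrier_mat nr1 nc1" "B \<in> carrier_mat nr1 nc2" "C \<in> carrier_mat nr2 nc1" "D \<in> carrier_mat nr2 nc2"
    and "four_block_mat A B C D = 0\<^sub>m (nr1 + nr2) (nc1 + nc2)"
  shows "B = 0\<^sub>m nr1 nc2"
proof (rule eq_matI)
  fix r s assume rs: "r < dim_row (0\<^sub>m nr1 nc2 :: 'a mat)" "s < dim_col (0\<^sub>m nr1 nc2 :: 'a mat)"
  have "four_block_mat A B C D $$ (r, s + nc1) = B $$ (r, s)"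
    using assms(1-4) rs by simp
  then show "B $$ (r, s) = 0\<^sub>m nr1 nc2 $$ (r, s)" using assms(5) rs by simp
qed (use assms in auto)

definition Hc :: "(nat \<Rightarrow> nat \<Rightarrow> nat \<Rightarrow> 'k::field) \<Rightarrow> nat \<Rightarrow> nat \<Rightarrow> nat \<Rightarrow> 'k" where
  "Hc hc t u v = (if Suc t < m \<and> u \<in> S (Suc t) \<and> v \<in> S t then hc t (jpos (Suc t) u) (jpos t v) else 0)"

lemma Xm_entry:
  assumes "i + l < m" "r < jdim I (i + l)" "s < jdim I i"
  shows "Xm hc i l $$ (r, s) = (\<Sum>t<l. Hc hc (i + t) (jsrc (i + l) r) (jsrc i s))"
  using assms
proof (induction l arbitrary: r)
  case 0
  then show ?case by simp
next
  case (Suc l)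
  let ?u = "jsrc (Suc (i + l)) r"
  let ?v = "jsrc i s"
  have m1: "Suc (i + l) < m" "i + l < m" using Suc.prems by auto
  have uS: "?u \<in> S (Suc (i + l))" using Suc.prems by (intro jsrc_in) simp
  have vS: "?v \<in> S i" using Suc.prems by (intro jsrc_in) simp
  have r': "r < jdim I (Suc (i + l))" using Suc.prems by simp
  have first: "(jmap I (i + l) * Xm hc i l) $$ (r, s) = (\<Sum>t<l. Hc hc (i + t) ?u ?v)"
  proof -
    have "(jmap I (i + l) * Xm hc i l) $$ (r, s) = (\<Sum>k<jdim I (i + l). jmap I (i + l) $$ (r, k) * Xm hc i l $$ (k, s))"
      using r' Suc.prems by (intro mult_entry[OF jmap_carrier Xm_carrier]) auto
    also have "\<dots> = (\<Sum>k<jdim I (i + l). (if jsrc (i + l) k = ?u then (\<Sum>t<l. Hc hc (i + t) ?u ?v) else 0))"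
    proof (rule sum.cong[OF refl])
      fix k assume k: "k \<in> {..<jdim I (i + l)}"
      have ih: "Xm hc i l $$ (k, s) = (\<Sum>t<l. Hc hc (i + t) (jsrc (i + l) k) ?v)"
        using Suc.prems k by (intro Suc.IH) auto
      have je: "jmap I (i + l) $$ (r, k) = (if ?u = jsrc (i + l) k then 1 else 0)"
        using r' k by (intro jmap_entry) auto
      show "jmap I (i + l) $$ (r, k) * Xm hc i l $$ (k, s) = (if jsrc (i + l) k = ?u then (\<Sum>t<l. Hc hc (i + t) ?u ?v) else 0)"
        unfolding ih je by auto
    qed
    also have "\<dots> = (if ?u \<in> S (i + l) then (\<Sum>t<l. Hc hc (i + t) ?u ?v) else 0)"
      by (rule sum_delta_jb)
    also have "\<dots> = (\<Sum>t<l. Hc hc (i + t) ?u ?v)"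
    proof (cases "?u \<in> S (i + l)")
      case True then show ?thesis by simp
    next
      case False
      have u1: "?u < Suc (i + l) \<and> Suc (i + l) < cc ?u" using uS mem_S[OF m1(1)] by blast
      then have "?u = i + l" using False mem_S[OF m1(2)] by auto
      then have "\<And>t. t < l \<Longrightarrow> Hc hc (i + t) ?u ?v = 0"
        unfolding Hc_def using mem_S by auto
      then show ?thesis using False by simp
    qed
    finally show ?thesis .
  qed
  have second: "(Hm hc (i + l) * pmap (jdim I) (jmap I) i l) $$ (r, s) = Hc hc (i + l) ?u ?v"
  proof -
    have "(Hm hc (i + l) * pmap (jdim I) (jmap I) i l) $$ (r, s) =
          (\<Sum>k<jdim I (i + l). Hm hc (i + l) $$ (r, k) * pmap (jdim I) (jmap I) i l $$ (k, s))"
      using r' Suc.prems by (intro mult_entry[OF Hm_carrier P_carrier]) auto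
    also have "\<dots> = (\<Sum>k<jdim I (i + l). (if jsrc (i + l) k = ?v then hc (i + l) r k else 0))"
    proof (rule sum.cong[OF refl])
      fix k assume k: "k \<in> {..<jdim I (i + l)}"
      have pe: "pmap (jdim I) (jmap I) i l $$ (k, s) = (if jsrc (i + l) k = ?v then 1 else 0)"
        using Suc.prems k by (intro P_entry) auto
      show "Hm hc (i + l) $$ (r, k) * pmap (jdim I) (jmap I) i l $$ (k, s) = (if jsrc (i + l) k = ?v then hc (i + l) r k else 0)"
        unfolding pe using Hm_entry[OF r'] k by auto
    qed
    also have "\<dots> = (if ?v \<in> S (i + l) then hc (i + l) r (jpos (i + l) ?v) else 0)"
      by (rule sum_delta_jb)
    also have "\<dots> = Hc hc (i + l) ?u ?v"
      unfolding Hc_def using uS m1 jpos_jsrc[OF r'] by auto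
    finally show ?thesis .
  qed
  have "Xm hc i (Suc l) $$ (r, s) = (jmap I (i + l) * Xm hc i l) $$ (r, s) + (Hm hc (i + l) * pmap (jdim I) (jmap I) i l) $$ (r, s)"
  proof -
    have c2: "Hm hc (i + l) * pmap (jdim I) (jmap I) i l \<in> carrier_mat (jdim I (Suc (i + l))) (jdim I i)"
      using Hm_carrier P_carrier by (rule mult_carrier_mat)
    have "dim_row (Hm hc (i + l) * pmap (jdim I) (jmap I) i l) = jdim I (Suc (i + l))"
         "dim_col (Hm hc (i + l) * pmap (jdim I) (jmap I) i l) = jdim I i" using c2 by auto
    then show ?thesis using r' Suc.prems by (simp only: Xm.simps index_add_mat(1))
  qed
  also have "\<dots> = (\<Sum>t<Suc l. Hc hc (i + t) ?u ?v)" unfolding first second by simp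
  finally show ?case by (simp only: add_Suc_right)
qed


lemma mat_zero_iff: "A \<in> carrier_mat a b \<Longrightarrow> (A = 0\<^sub>m a b) \<longleftrightarrow> (\<forall>r<a. \<forall>s<b. A $$ (r, s) = 0)"
  by (auto intro!: eq_matI)

lemma sum_shift_ivl: "(i::nat) \<le> j \<Longrightarrow> (\<Sum>t<j - i. f (i + t)) = (\<Sum>t\<in>{i..<j}. f t)"
proof -
  assume ij: "i \<le> j"
  have "(\<Sum>t\<in>{i..<j}. f t) = (\<Sum>t\<in>{0 + i..<(j - i) + i}. f t)" using ij by simp
  also have "\<dots> = (\<Sum>t\<in>{0..<j - i}. f (t + i))" by (rule sum.shift_bounds_nat_ivl)
  finally show ?thesis by (simp add: atLeast0LessThan add.commute)
qed

lemma Em_eq: "(\<lambda>j. four_block_mat (jmap I j) (hmat (jdim I) (jdim I) hc j) (0\<^sub>m (jdim I (Suc j)) (jdim I j)) (jmap I j)) = Em hc"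
  unfolding Em_def Hm_def by simp

lemma Zchar:
  "hc \<in> ext_cocycles m I (jdim I) (jmap I) (jdim I) (jmap I) \<longleftrightarrow>
   hsupp m (jdim I) (jdim I) hc \<and>
   (\<forall>i j. (i, j) \<in> I \<longrightarrow> (\<forall>u\<in>S j. \<forall>v\<in>S i. (\<Sum>t\<in>{i..<j}. Hc hc t u v) = 0))"
proof -
  have carr: "\<forall>j. Suc j < m \<longrightarrow> Em hc j \<in> carrier_mat (jdim I (Suc j) + jdim I (Suc j)) (jdim I j + jdim I j)"
    unfolding Em_def using jmap_carrier by (auto intro!: four_block_carrier_mat)
  have key: "pmap (\<lambda>j. jdim I j + jdim I j) (Em hc) i (j - i) = 0\<^sub>m (jdim I j + jdim I j) (jdim I i + jdim I i)
             \<longleftrightarrow> (\<forall>u\<in>S j. \<forall>v\<in>S i. (\<Sum>t\<in>{i..<j}. Hc hc t u v) = 0)" if ij: "(i, j) \<in> I" for i j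
  proof -
    have ij': "i + 2 \<le> j" "j < m" using I_sub ij by auto
    have ij2: "i + (j - i) = j" using ij' by simp
    have P0: "pmap (jdim I) (jmap I) i (j - i) = (0\<^sub>m (jdim I j) (jdim I i) :: 'a mat)" by (rule P_zero[OF ij])
    have cX: "Xm hc i (j - i) \<in> carrier_mat (jdim I j) (jdim I i)" using Xm_carrier[of hc i "j - i"] ij2 by simp
    have "pmap (\<lambda>j. jdim I j + jdim I j) (Em hc) i (j - i) = four_block_mat (0\<^sub>m (jdim I j) (jdim I i)) (Xm hc i (j - i)) (0\<^sub>m (jdim I j) (jdim I i)) (0\<^sub>m (jdim I j) (jdim I i))"
      unfolding pmapE P0 ij2 by simp
    then have "(pmap (\<lambda>j. jdim I j + jdim I j) (Em hc) i (j - i) = 0\<^sub>m (jdim I j + jdim I j) (jdim I i + jdim I i))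
               \<longleftrightarrow> Xm hc i (j - i) = 0\<^sub>m (jdim I j) (jdim I i)"
      using four_block_zero_B[of "0\<^sub>m (jdim I j) (jdim I i)" "jdim I j" "jdim I i" "Xm hc i (j - i)" "jdim I i"
          "0\<^sub>m (jdim I j) (jdim I i)" "jdim I j" "0\<^sub>m (jdim I j) (jdim I i)"] cX
      by (metis four_block_zero_mat zero_carrier_mat)
    also have "\<dots> \<longleftrightarrow> (\<forall>r<jdim I j. \<forall>s<jdim I i. Xm hc i (j - i) $$ (r, s) = 0)"
      by (rule mat_zero_iff[OF cX])
    also have "\<dots> \<longleftrightarrow> (\<forall>r<jdim I j. \<forall>s<jdim I i. (\<Sum>t\<in>{i..<j}. Hc hc t (jsrc j r) (jsrc i s)) = 0)"
    proof -
      have "\<And>r s. r < jdim I j \<Longrightarrow> s < jdim I i \<Longrightarrow> Xm hc i (j - i) $$ (r, s) = (\<Sum>t\<in>{i..<j}. Hc hc t (jsrc j r) (jsrc i s))"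
      proof -
        fix r s assume rs: "r < jdim I j" "s < jdim I i"
        have "Xm hc i (j - i) $$ (r, s) = (\<Sum>t<j - i. Hc hc (i + t) (jsrc (i + (j - i)) r) (jsrc i s))"
          using rs ij' ij2 by (intro Xm_entry) auto
        also have "\<dots> = (\<Sum>t\<in>{i..<j}. Hc hc t (jsrc j r) (jsrc i s))"
          unfolding ij2 using ij' by (intro sum_shift_ivl) simp
        finally show "Xm hc i (j - i) $$ (r, s) = (\<Sum>t\<in>{i..<j}. Hc hc t (jsrc j r) (jsrc i s))" .
      qed
      then show ?thesis by simp
    qed
    also have "\<dots> \<longleftrightarrow> (\<forall>u\<in>S j. \<forall>v\<in>S i. (\<Sum>t\<in>{i..<j}. Hc hc t u v) = 0)"
    proof
      assume a: "\<forall>r<jdim I j. \<forall>s<jdim I i. (\<Sum>t\<in>{i..<j}. Hc hc t (jsrc j r) (jsrc i s)) = 0"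
      show "\<forall>u\<in>S j. \<forall>v\<in>S i. (\<Sum>t\<in>{i..<j}. Hc hc t u v) = 0"
      proof (intro ballI)
        fix u v assume uv: "u \<in> S j" "v \<in> S i"
        have "(\<Sum>t\<in>{i..<j}. Hc hc t (jsrc j (jpos j u)) (jsrc i (jpos i v))) = 0"
          using a jpos_props(1)[OF uv(1)] jpos_props(1)[OF uv(2)] by blast
        then show "(\<Sum>t\<in>{i..<j}. Hc hc t u v) = 0" using jpos_props(2)[OF uv(1)] jpos_props(2)[OF uv(2)] by simp
      qed
    next
      assume a: "\<forall>u\<in>S j. \<forall>v\<in>S i. (\<Sum>t\<in>{i..<j}. Hc hc t u v) = 0"
      show "\<forall>r<jdim I j. \<forall>s<jdim I i. (\<Sum>t\<in>{i..<j}. Hc hc t (jsrc j r) (jsrc i s)) = 0"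
        using a jsrc_in by blast
    qed
    finally show ?thesis .
  qed
  show ?thesis
    unfolding ext_cocycles_def Em_eq is_rep_def
    using carr key by auto
qed

end

lemma sum_eq_support:
  assumes "finite A" "finite B" "\<And>t. t \<in> A \<Longrightarrow> t \<notin> B \<Longrightarrow> f t = 0" "\<And>t. t \<in> B \<Longrightarrow> t \<notin> A \<Longrightarrow> f t = 0"
  shows "sum f A = sum f B"
proof -
  have "sum f A = sum f (A \<union> B)"
    using assms by (intro sum.mono_neutral_left) auto
  moreover have "sum f B = sum f (A \<union> B)"
    using assms by (intro sum.mono_neutral_left) auto
  ultimately show ?thesis by simp
qed

lemma tele:
  assumes ab: "(a::nat) < b"
  shows "(\<Sum>t\<in>{a..<b}. (if a < t then G t else 0) - (if Suc t < b then G (Suc t) else (0::'a::ab_group_add))) = 0"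
proof -
  obtain b' where b: "b = Suc b'" using ab by (cases b) auto
  have ab': "a \<le> b'" using ab b by simp
  have s1: "(\<Sum>t\<in>{a..<b}. (if a < t then G t else 0)) = (\<Sum>t\<in>{Suc a..<b}. G t)"
  proof -
    have "(\<Sum>t\<in>{a..<b}. (if a < t then G t else 0)) = (if a < a then G a else 0) + (\<Sum>t\<in>{Suc a..<b}. (if a < t then G t else 0))"
      using ab by (rule sum.atLeast_Suc_lessThan)
    moreover have "(\<Sum>t\<in>{Suc a..<b}. (if a < t then G t else 0)) = (\<Sum>t\<in>{Suc a..<b}. G t)"
      by (rule sum.cong) auto
    ultimately show ?thesis by simp
  qed
  have s2: "(\<Sum>t\<in>{a..<b}. (if Suc t < b then G (Suc t) else 0)) = (\<Sum>t\<in>{Suc a..<b}. G t)"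
  proof -
    have "(\<Sum>t\<in>{a..<b}. (if Suc t < b then G (Suc t) else 0)) =
          (\<Sum>t\<in>{a..<b'}. (if Suc t < b then G (Suc t) else 0)) + (if Suc b' < b then G (Suc b') else 0)"
      unfolding b using ab' by (rule sum.atLeastLessThan_Suc)
    also have "\<dots> = (\<Sum>t\<in>{a..<b'}. G (Suc t))" using b by (auto intro: sum.cong)
    also have "\<dots> = (\<Sum>t\<in>{Suc a..<Suc b'}. G t)" by (rule sum.shift_bounds_Suc_ivl[symmetric])
    finally show ?thesis using b by simp
  qed
  show ?thesis unfolding sum_subtractf s1 s2 by simp
qed

context nak begin

definition phi :: "(nat \<Rightarrow> nat \<Rightarrow> nat \<Rightarrow> 'k::field) \<Rightarrow> nat \<times> nat \<Rightarrow> 'k" where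
  "phi hc p = (\<Sum>t<cc (snd p). Hc hc t (fst p) (snd p))"

definition FP :: "(nat \<times> nat) set" where
  "FP = {(u, v). v < u \<and> u < cc v \<and> cc v < cc u}"

definition CP :: "(nat \<times> nat) set" where
  "CP = {(u, v). (u, v) \<in> FP \<and> (\<exists>i j. (i, j) \<in> I \<and> u \<in> S j \<and> v \<in> S i)}"

lemma wit_facts:
  assumes "(i, j) \<in> I" "u \<in> S j" "v \<in> S i"
  shows "i \<le> u \<and> cc v \<le> j \<and> v < u \<and> cc v < cc u \<and> v < i \<and> i < cc v \<and> j < cc u \<and> u < j \<and> j < m"
proof -
  have ij: "i + 2 \<le> j" "j < m" using I_sub assms(1) by auto
  have u: "u < j" "j < cc u" using assms(2) mem_S[OF ij(2)] by auto
  have v: "v < i" "i < cc v" using assms(3) mem_S[of i] ij by auto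
  have ci: "cc i \<le> j" using assms(1) I_iff ij by auto
  have iu: "i < u"
  proof (rule ccontr)
    assume "\<not> i < u" then have "cc u \<le> cc i" using cc_mono by simp
    then show False using ci u by simp
  qed
  have "cc v \<le> cc i" using v cc_mono by simp
  then show ?thesis using iu ci u v ij by auto
qed

lemma Hc_nz:
  assumes "Hc hc t u v \<noteq> 0"
  shows "Suc t < m \<and> u \<le> t \<and> v < t \<and> t < cc v \<and> Suc t < cc u"
proof -
  have a: "Suc t < m" "u \<in> S (Suc t)" "v \<in> S t" using assms unfolding Hc_def by (auto split: if_splits)
  then show ?thesis using mem_S[OF a(1)] mem_S[of t] by auto
qed

lemma FP_bound: "(u, v) \<in> FP \<Longrightarrow> u < m \<and> v < m \<and> Suc u < m \<and> cc v \<le> m \<and> cc u \<le> m"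
proof -
  assume a: "(u, v) \<in> FP"
  then have b: "v < u" "u < cc v" "cc v < cc u" unfolding FP_def by auto
  have "cc u \<le> m" "cc v \<le> m" using cc_le by auto
  then show ?thesis using b by auto
qed

lemma finite_FP: "finite FP"
proof -
  have "FP \<subseteq> {..<m} \<times> {..<m}" using FP_bound by auto
  then show ?thesis by (rule finite_subset) simp
qed

lemma Zchar2:
  "hc \<in> ext_cocycles m I (jdim I) (jmap I) (jdim I) (jmap I) \<longleftrightarrow>
   hsupp m (jdim I) (jdim I) hc \<and> (\<forall>p\<in>CP. phi hc p = 0)"
proof -
  have eqsum: "(\<Sum>t\<in>{i..<j}. Hc hc t u v) = phi hc (u, v)" if w: "(i, j) \<in> I" "u \<in> S j" "v \<in> S i" for i j u v
  proof -
    have f: "i \<le> u" "cc v \<le> j" using wit_facts[OF w] by auto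
    have "(\<Sum>t\<in>{i..<j}. Hc hc t u v) = (\<Sum>t\<in>{..<cc v}. Hc hc t u v)"
    proof (rule sum_eq_support)
      fix t assume "t \<in> {i..<j}" "t \<notin> {..<cc v}"
      then show "Hc hc t u v = 0" using Hc_nz[of hc t u v] by auto
    next
      fix t assume "t \<in> {..<cc v}" "t \<notin> {i..<j}"
      then show "Hc hc t u v = 0" using Hc_nz[of hc t u v] f by auto
    qed auto
    then show ?thesis unfolding phi_def by simp
  qed
  show ?thesis
  proof
    assume "hc \<in> ext_cocycles m I (jdim I) (jmap I) (jdim I) (jmap I)"
    then have h: "hsupp m (jdim I) (jdim I) hc" "\<forall>i j. (i, j) \<in> I \<longrightarrow> (\<forall>u\<in>S j. \<forall>v\<in>S i. (\<Sum>t\<in>{i..<j}. Hc hc t u v) = 0)"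
      using Zchar[of hc] by blast+
    have "\<forall>p\<in>CP. phi hc p = 0"
    proof
      fix p assume "p \<in> CP"
      then obtain u v i j where p: "p = (u, v)" "(i, j) \<in> I" "u \<in> S j" "v \<in> S i" unfolding CP_def by auto
      then show "phi hc p = 0" using h(2) eqsum[OF p(2-4)] by auto
    qed
    then show "hsupp m (jdim I) (jdim I) hc \<and> (\<forall>p\<in>CP. phi hc p = 0)" using h by simp
  next
    assume a: "hsupp m (jdim I) (jdim I) hc \<and> (\<forall>p\<in>CP. phi hc p = 0)"
    have "\<forall>i j. (i, j) \<in> I \<longrightarrow> (\<forall>u\<in>S j. \<forall>v\<in>S i. (\<Sum>t\<in>{i..<j}. Hc hc t u v) = 0)"
    proof (intro allI impI ballI)
      fix i j u v assume w: "(i, j) \<in> I" "u \<in> S j" "v \<in> S i"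
      show "(\<Sum>t\<in>{i..<j}. Hc hc t u v) = 0"
      proof (cases "(u, v) \<in> FP")
        case True
        then have "(u, v) \<in> CP" unfolding CP_def using w by blast
        then show ?thesis using a eqsum[OF w] by simp
      next
        case False
        have "\<And>t. Hc hc t u v = 0"
        proof (rule ccontr)
          fix t assume "Hc hc t u v \<noteq> 0"
          then have "u < cc v" using Hc_nz by fastforce
          then have "(u, v) \<in> FP" unfolding FP_def using wit_facts[OF w] by auto
          then show False using False by simp
        qed
        then show ?thesis by simp
      qed
    qed
    then show "hc \<in> ext_cocycles m I (jdim I) (jmap I) (jdim I) (jmap I)" using Zchar[of hc] a by blast
  qed
qed

end

context nak begin

lemma cob_entry:
  assumes g: "\<forall>j<m. g j \<in> carrier_mat (jdim I j) (jdim I j)"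
    and t: "Suc t < m" and u: "u \<in> S (Suc t)" and v: "v \<in> S t"
  shows "(jmap I t * g t - g (Suc t) * jmap I t) $$ (jpos (Suc t) u, jpos t v) =
         (if u \<in> S t then g t $$ (jpos t u, jpos t v) else 0) -
         (if v \<in> S (Suc t) then g (Suc t) $$ (jpos (Suc t) u, jpos (Suc t) v) else (0::'k::field))"
proof -
  let ?r = "jpos (Suc t) u" and ?s = "jpos t v"
  have r: "?r < jdim I (Suc t)" "jsrc (Suc t) ?r = u" using jpos_props[OF u] by auto
  have s: "?s < jdim I t" "jsrc t ?s = v" using jpos_props[OF v] by auto
  have gt: "g t \<in> carrier_mat (jdim I t) (jdim I t)" using g t by simp
  have gs: "g (Suc t) \<in> carrier_mat (jdim I (Suc t)) (jdim I (Suc t))" using g t by simp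
  have c2: "g (Suc t) * jmap I t \<in> carrier_mat (jdim I (Suc t)) (jdim I t)"
    using gs jmap_carrier by (rule mult_carrier_mat)
  have e1: "(jmap I t * g t) $$ (?r, ?s) = (if u \<in> S t then g t $$ (jpos t u, ?s) else 0)"
  proof -
    have "(jmap I t * g t) $$ (?r, ?s) = (\<Sum>k<jdim I t. jmap I t $$ (?r, k) * g t $$ (k, ?s))"
      using r s by (intro mult_entry[OF jmap_carrier gt]) auto
    also have "\<dots> = (\<Sum>k<jdim I t. (if jsrc t k = u then g t $$ (k, ?s) else 0))"
    proof (rule sum.cong[OF refl])
      fix k assume k: "k \<in> {..<jdim I t}"
      have "jmap I t $$ (?r, k) = (if jsrc (Suc t) ?r = jsrc t k then 1 else 0)"
        using r k by (intro jmap_entry) auto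
      then show "jmap I t $$ (?r, k) * g t $$ (k, ?s) = (if jsrc t k = u then g t $$ (k, ?s) else 0)"
        using r by auto
    qed
    also have "\<dots> = (if u \<in> S t then g t $$ (jpos t u, ?s) else 0)" by (rule sum_delta_jb)
    finally show ?thesis .
  qed
  have e2: "(g (Suc t) * jmap I t) $$ (?r, ?s) = (if v \<in> S (Suc t) then g (Suc t) $$ (?r, jpos (Suc t) v) else 0)"
  proof -
    have "(g (Suc t) * jmap I t) $$ (?r, ?s) = (\<Sum>k<jdim I (Suc t). g (Suc t) $$ (?r, k) * jmap I t $$ (k, ?s))"
      using r s by (intro mult_entry[OF gs jmap_carrier]) auto
    also have "\<dots> = (\<Sum>k<jdim I (Suc t). (if jsrc (Suc t) k = v then g (Suc t) $$ (?r, k) else 0))"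
    proof (rule sum.cong[OF refl])
      fix k assume k: "k \<in> {..<jdim I (Suc t)}"
      have "jmap I t $$ (k, ?s) = (if jsrc (Suc t) k = jsrc t ?s then 1 else 0)"
        using s k by (intro jmap_entry) auto
      then show "g (Suc t) $$ (?r, k) * jmap I t $$ (k, ?s) = (if jsrc (Suc t) k = v then g (Suc t) $$ (?r, k) else 0)"
        using s by auto
    qed
    also have "\<dots> = (if v \<in> S (Suc t) then g (Suc t) $$ (?r, jpos (Suc t) v) else 0)" by (rule sum_delta_jb)
    finally show ?thesis .
  qed
  have "(jmap I t * g t - g (Suc t) * jmap I t) $$ (?r, ?s) = (jmap I t * g t) $$ (?r, ?s) - (g (Suc t) * jmap I t) $$ (?r, ?s)"
  proof -
    have "dim_row (g (Suc t) * jmap I t) = jdim I (Suc t)" "dim_col (g (Suc t) * jmap I t) = jdim I t" using c2 by auto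
    then show ?thesis using r s by (simp only: index_minus_mat(1))
  qed
  then show ?thesis unfolding e1 e2 .
qed

lemma Bchar_fwd:
  assumes hb: "hc \<in> ext_coboundaries m (jdim I) (jmap I) (jdim I) (jmap I)" and p: "p \<in> FP"
  shows "phi hc p = 0"
proof -
  obtain g where g: "\<forall>j<m. g j \<in> carrier_mat (jdim I j) (jdim I j)"
    and ge: "\<forall>j. Suc j < m \<longrightarrow> hmat (jdim I) (jdim I) hc j = jmap I j * g j - g (Suc j) * jmap I j"
    using hb unfolding ext_coboundaries_def by auto
  obtain u v where uv: "p = (u, v)" by force
  have f: "v < u" "u < cc v" "cc v < cc u" using p uv unfolding FP_def by auto
  have ccm: "cc u \<le> m" by (rule cc_le)
  define G where "G t = g t $$ (jpos t u, jpos t v)" for t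
  have trm: "Hc hc t u v = (if u \<le> t then (if u < t then G t else 0) - (if Suc t < cc v then G (Suc t) else 0) else 0)"
    if tl: "t < cc v" for t
  proof -
    have t1: "Suc t < m" using tl f ccm by linarith
    have t0: "t < m" using t1 by linarith
    have tcu: "Suc t < cc u" using tl f by linarith
    have uS1: "u \<in> S (Suc t) \<longleftrightarrow> u \<le> t" using mem_S[OF t1, of u] tcu by linarith
    have vS: "v \<in> S t \<longleftrightarrow> v < t" using mem_S[OF t0, of v] tl by linarith
    have uS: "u \<in> S t \<longleftrightarrow> u < t" using mem_S[OF t0, of u] tcu by linarith
    have vS1: "v \<in> S (Suc t) \<longleftrightarrow> v < Suc t \<and> Suc t < cc v" by (rule mem_S[OF t1])
    show ?thesis
    proof (cases "u \<le> t")
      case True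
      then have us: "u \<in> S (Suc t)" "v \<in> S t" using uS1 vS f by auto
      have "Hc hc t u v = hc t (jpos (Suc t) u) (jpos t v)" unfolding Hc_def using us t1 by simp
      also have "\<dots> = hmat (jdim I) (jdim I) hc t $$ (jpos (Suc t) u, jpos t v)"
        unfolding hmat_def using jpos_props(1)[OF us(1)] jpos_props(1)[OF us(2)] by simp
      also have "\<dots> = (jmap I t * g t - g (Suc t) * jmap I t) $$ (jpos (Suc t) u, jpos t v)"
        using ge t1 by simp
      also have "\<dots> = (if u \<in> S t then G t else 0) - (if v \<in> S (Suc t) then G (Suc t) else 0)"
        unfolding G_def by (rule cob_entry[OF g t1 us])
      also have "\<dots> = (if u < t then G t else 0) - (if Suc t < cc v then G (Suc t) else 0)"
      proof -
        have "(u \<in> S t) = (u < t)" by (rule uS)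
        moreover have "(v \<in> S (Suc t)) = (Suc t < cc v)" using vS1 f True by auto
        ultimately show ?thesis by simp
      qed
      finally show ?thesis using True by simp
    next
      case False
      then have "u \<notin> S (Suc t)" using uS1 by simp
      then show ?thesis unfolding Hc_def using False by simp
    qed
  qed
  have "phi hc p = (\<Sum>t<cc v. Hc hc t u v)" unfolding phi_def uv by simp
  also have "\<dots> = (\<Sum>t<cc v. (if u \<le> t then (if u < t then G t else 0) - (if Suc t < cc v then G (Suc t) else 0) else 0))"
  proof (rule sum.cong[OF refl])
    fix t assume "t \<in> {..<cc v}"
    then show "Hc hc t u v = (if u \<le> t then (if u < t then G t else 0) - (if Suc t < cc v then G (Suc t) else 0) else 0)"
      by (intro trm) simp
  qed
  also have "\<dots> = (\<Sum>t\<in>{u..<cc v}. (if u < t then G t else 0) - (if Suc t < cc v then G (Suc t) else 0))"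
  proof -
    have "(\<Sum>t<cc v. (if u \<le> t then (if u < t then G t else 0) - (if Suc t < cc v then G (Suc t) else 0) else 0)) =
          (\<Sum>t\<in>{t \<in> {..<cc v}. u \<le> t}. (if u < t then G t else 0) - (if Suc t < cc v then G (Suc t) else 0))"
      by (rule sum.inter_filter[symmetric]) simp
    moreover have "{t \<in> {..<cc v}. u \<le> t} = {u..<cc v}" by auto
    ultimately show ?thesis by simp
  qed
  also have "\<dots> = 0" using f by (intro tele) simp
  finally show ?thesis .
qed


lemma Hc_below: "t' < u \<Longrightarrow> Hc hc t' u v = 0"
  using Hc_nz[of hc t' u v] by linarith

lemma Bchar_bwd:
  assumes hs: "hsupp m (jdim I) (jdim I) hc" and ph: "\<forall>p\<in>FP. phi hc p = 0"
  shows "hc \<in> ext_coboundaries m (jdim I) (jmap I) (jdim I) (jmap I)"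
proof -
  define g where "g t = mat (jdim I t) (jdim I t) (\<lambda>(r, s). - (\<Sum>t'<t. Hc hc t' (jsrc t r) (jsrc t s)))" for t
  have gc: "\<forall>j<m. g j \<in> carrier_mat (jdim I j) (jdim I j)" unfolding g_def by simp
  have gent: "g t $$ (jpos t u, jpos t v) = - (\<Sum>t'<t. Hc hc t' u v)" if "u \<in> S t" "v \<in> S t" for t u v
    unfolding g_def using jpos_props[OF that(1)] jpos_props[OF that(2)] by simp
  have eq: "hmat (jdim I) (jdim I) hc t = jmap I t * g t - g (Suc t) * jmap I t" if t1: "Suc t < m" for t
  proof -
    have t0: "t < m" using t1 by linarith
    have c2: "g (Suc t) * jmap I t \<in> carrier_mat (jdim I (Suc t)) (jdim I t)"
      using gc t1 jmap_carrier by (intro mult_carrier_mat) auto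
    show ?thesis
    proof (rule eq_matI)
      fix r s assume rs: "r < dim_row (jmap I t * g t - g (Suc t) * jmap I t)" "s < dim_col (jmap I t * g t - g (Suc t) * jmap I t)"
      then have rs': "r < jdim I (Suc t)" "s < jdim I t" using c2 by auto
      define u where "u = jsrc (Suc t) r"
      define v where "v = jsrc t s"
      have uS: "u \<in> S (Suc t)" unfolding u_def using rs' by (intro jsrc_in) simp
      have vS: "v \<in> S t" unfolding v_def using rs' by (intro jsrc_in) simp
      have rp: "jpos (Suc t) u = r" unfolding u_def using rs' by (intro jpos_jsrc) simp
      have sp: "jpos t v = s" unfolding v_def using rs' by (intro jpos_jsrc) simp
      have u1: "u < Suc t" "Suc t < cc u" using uS mem_S[OF t1, of u] by auto
      have v1: "v < t" "t < cc v" using vS mem_S[OF t0, of v] by auto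
      have uSt: "u \<in> S t \<longleftrightarrow> u < t" using mem_S[OF t0, of u] u1 by linarith
      have vSt: "v \<in> S (Suc t) \<longleftrightarrow> Suc t < cc v" using mem_S[OF t1, of v] v1 by linarith
      define A where "A = (\<Sum>t'<t. Hc hc t' u v)"
      have A0: "u = t \<Longrightarrow> A = 0"
      proof -
        assume ut: "u = t"
        have "\<forall>t'\<in>{..<t}. Hc hc t' u v = 0" using Hc_below ut by auto
        then show "A = 0" unfolding A_def by (intro sum.neutral) blast
      qed
      have lhs: "hmat (jdim I) (jdim I) hc t $$ (r, s) = Hc hc t u v"
        unfolding hmat_def Hc_def using rs' t1 uS vS rp sp by simp
      have rhs: "(jmap I t * g t - g (Suc t) * jmap I t) $$ (r, s) =
                 (if u < t then - A else 0) - (if Suc t < cc v then - (A + Hc hc t u v) else 0)"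
      proof -
        have "(jmap I t * g t - g (Suc t) * jmap I t) $$ (r, s) =
              (if u \<in> S t then g t $$ (jpos t u, jpos t v) else 0) -
              (if v \<in> S (Suc t) then g (Suc t) $$ (jpos (Suc t) u, jpos (Suc t) v) else 0)"
          using cob_entry[OF gc t1 uS vS] rp sp by simp
        also have "\<dots> = (if u < t then - A else 0) - (if Suc t < cc v then - (A + Hc hc t u v) else 0)"
        proof -
          have a1: "(if u \<in> S t then g t $$ (jpos t u, jpos t v) else 0) = (if u < t then - A else 0)"
            using gent[of u t v] vS uSt unfolding A_def by auto
          have a2: "(if v \<in> S (Suc t) then g (Suc t) $$ (jpos (Suc t) u, jpos (Suc t) v) else 0) =
                    (if Suc t < cc v then - (A + Hc hc t u v) else 0)"
            using gent[of u "Suc t" v] uS vSt unfolding A_def by auto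
          show ?thesis unfolding a1 a2 ..
        qed
        finally show ?thesis .
      qed
      show "hmat (jdim I) (jdim I) hc t $$ (r, s) = (jmap I t * g t - g (Suc t) * jmap I t) $$ (r, s)"
        unfolding lhs rhs
      proof (cases "Suc t < cc v")
        case True
        show "Hc hc t u v = (if u < t then - A else 0) - (if Suc t < cc v then - (A + Hc hc t u v) else 0)"
        proof (cases "u < t")
          case True then show ?thesis using \<open>Suc t < cc v\<close> by simp
        next
          case False then have "u = t" using u1 by linarith
          then show ?thesis using A0 \<open>Suc t < cc v\<close> by simp
        qed
      next
        case False
        then have cv: "cc v = Suc t" using v1 by linarith
        have vu: "v < u"
        proof (rule ccontr)
          assume "\<not> v < u" then have "cc u \<le> cc v" using cc_mono by simp
          then show False using cv u1 by linarith
        qed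
        have fp: "(u, v) \<in> FP" unfolding FP_def using vu cv u1 by auto
        have "phi hc (u, v) = A + Hc hc t u v" unfolding phi_def A_def using cv by simp
        then have z: "A + Hc hc t u v = 0" using ph fp by simp
        show "Hc hc t u v = (if u < t then - A else 0) - (if Suc t < cc v then - (A + Hc hc t u v) else 0)"
        proof (cases "u < t")
          case True then show ?thesis using False z by (simp add: eq_neg_iff_add_eq_0 add.commute)
        next
          case False then have "u = t" using u1 by linarith
          then show ?thesis using A0 z \<open>\<not> Suc t < cc v\<close> by simp
        qed
      qed
    next
      have "dim_row (g (Suc t) * jmap I t) = jdim I (Suc t)" "dim_col (g (Suc t) * jmap I t) = jdim I t"
        using c2 by auto
      then show "dim_row (hmat (jdim I) (jdim I) hc t) = dim_row (jmap I t * g t - g (Suc t) * jmap I t)"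
        "dim_col (hmat (jdim I) (jdim I) hc t) = dim_col (jmap I t * g t - g (Suc t) * jmap I t)"
        unfolding hmat_def by (simp_all only: index_minus_mat(2,3) dim_row_mat dim_col_mat)
    qed
  qed
  show ?thesis unfolding ext_coboundaries_def using hs gc eq by blast
qed

lemma Bchar:
  "hc \<in> ext_coboundaries m (jdim I) (jmap I) (jdim I) (jmap I) \<longleftrightarrow>
   hsupp m (jdim I) (jdim I) hc \<and> (\<forall>p\<in>FP. phi hc p = 0)"
  using Bchar_fwd Bchar_bwd unfolding ext_coboundaries_def by blast

end

context vector_space begin

lemma dim_count:
  fixes \<phi> :: "'i \<Rightarrow> 'b \<Rightarrow> 'a" and z :: "'i \<Rightarrow> 'b"
  assumes V: "subspace V"
    and W: "finite W" "V \<subseteq> span W"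
    and add: "\<And>p x y. \<phi> p (x + y) = \<phi> p x + \<phi> p y"
    and smul: "\<And>p c x. \<phi> p (c *s x) = c * \<phi> p x"
    and finE: "finite (FP - CP)"
    and zV: "\<And>e. e \<in> FP - CP \<Longrightarrow> z e \<in> V"
    and zd: "\<And>e q. e \<in> FP - CP \<Longrightarrow> \<phi> q (z e) = (if q = e then 1 else 0)"
    and BZ: "\<And>h. h \<in> V \<Longrightarrow> \<forall>p\<in>FP. \<phi> p h = 0 \<Longrightarrow> \<forall>p\<in>CP. \<phi> p h = 0"
  shows "dim {h\<in>V. \<forall>p\<in>CP. \<phi> p h = 0} = dim {h\<in>V. \<forall>p\<in>FP. \<phi> p h = 0} + card (FP - CP)"
proof -
  define B where "B = {h\<in>V. \<forall>p\<in>FP. \<phi> p h = 0}"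
  define Z where "Z = {h\<in>V. \<forall>p\<in>CP. \<phi> p h = 0}"
  define E where "E = FP - CP"
  have phi0: "\<phi> p 0 = 0" for p
  proof -
    have "\<phi> p (0 + 0) = \<phi> p 0 + \<phi> p 0" by (rule add)
    then have "\<phi> p 0 + \<phi> p 0 = \<phi> p 0" by simp
    then show ?thesis by (simp only: add_cancel_left_right)
  qed
  have phidiff: "\<phi> p (x - y) = \<phi> p x - \<phi> p y" for p x y
  proof -
    have "\<phi> p ((x - y) + y) = \<phi> p (x - y) + \<phi> p y" by (rule add)
    then show ?thesis by simp
  qed
  have phisum: "\<phi> p (sum f A) = (\<Sum>a\<in>A. \<phi> p (f a))" if "finite A" for p f and A :: "'i set"
    using that by (induction A rule: finite_induct) (auto simp: phi0 add)
  have phispan: "\<phi> p y = 0" if "\<forall>x\<in>A. \<phi> p x = 0" "y \<in> span A" for p A y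
  proof -
    have "subspace {x. \<phi> p x = 0}"
      by (rule subspaceI) (auto simp: phi0 add smul)
    then have "span A \<subseteq> {x. \<phi> p x = 0}" using that(1) by (intro span_minimal) auto
    then show ?thesis using that(2) by auto
  qed
  have Bsub: "subspace B" unfolding B_def
    by (rule subspaceI) (auto simp: phi0 add smul V subspace_0 subspace_add subspace_scale)
  obtain Bb where Bb: "Bb \<subseteq> B" "independent Bb" "B \<subseteq> span Bb" "card Bb = dim B"
    using basis_exists[of B] by blast
  have finBb: "finite Bb"
  proof -
    have "Bb \<subseteq> span W" using Bb(1) W(2) unfolding B_def by auto
    then show ?thesis using independent_span_bound[OF W(1) Bb(2)] by simp
  qed
  have BbB: "\<And>b p. b \<in> Bb \<Longrightarrow> p \<in> FP \<Longrightarrow> \<phi> p b = 0" using Bb(1) unfolding B_def by auto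
  have ze: "\<phi> e (z e) = 1" if "e \<in> E" for e using zd[of e e] that unfolding E_def by simp
  have zne: "\<phi> e (z e') = 0" if "e' \<in> E" "e' \<noteq> e" for e e' using zd[of e' e] that unfolding E_def by simp
  have EFP: "E \<subseteq> FP" unfolding E_def by auto
  have ind: "independent (Bb \<union> z ` E')" if "E' \<subseteq> E" for E'
  proof -
    have "finite E'" using that finE finite_subset unfolding E_def by blast
    then show ?thesis using that
    proof (induction E' rule: finite_induct)
      case empty
      then show ?case using Bb(2) by simp
    next
      case (insert e E')
      have e: "e \<in> E" using insert.prems by simp
      have vanish: "\<forall>x\<in>Bb \<union> z ` E'. \<phi> e x = 0"
      proof
        fix x assume "x \<in> Bb \<union> z ` E'"
        then show "\<phi> e x = 0"
        proof
          assume "x \<in> Bb" then show ?thesis using BbB e EFP by auto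
        next
          assume "x \<in> z ` E'"
          then obtain e' where "e' \<in> E'" "x = z e'" by auto
          then show ?thesis using zne[of e' e] insert.hyps insert.prems by auto
        qed
      qed
      have nsp: "z e \<notin> span (Bb \<union> z ` E')"
      proof
        assume "z e \<in> span (Bb \<union> z ` E')"
        then have "\<phi> e (z e) = 0" using phispan vanish by blast
        then show False using ze[OF e] by simp
      qed
      have "independent (Bb \<union> z ` E')" using insert by simp
      then have "independent (insert (z e) (Bb \<union> z ` E'))"
        using nsp by (rule independent_insertI[rotated])
      moreover have "Bb \<union> z ` insert e E' = insert (z e) (Bb \<union> z ` E')" by auto
      ultimately show ?case by simp
    qed
  qed
  have indep: "independent (Bb \<union> z ` E)" using ind by simp
  have sub: "Bb \<union> z ` E \<subseteq> Z"
  proof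
    fix x assume "x \<in> Bb \<union> z ` E"
    then show "x \<in> Z"
    proof
      assume "x \<in> Bb"
      then have "x \<in> B" using Bb(1) by auto
      then show "x \<in> Z" unfolding Z_def using BZ unfolding B_def by auto
    next
      assume "x \<in> z ` E"
      then obtain e where e: "e \<in> E" "x = z e" by auto
      have "x \<in> V" using zV e unfolding E_def by auto
      moreover have "\<forall>p\<in>CP. \<phi> p x = 0"
      proof
        fix p assume "p \<in> CP"
        then have "p \<noteq> e" using e unfolding E_def by auto
        then show "\<phi> p x = 0" using zd[of e p] e unfolding E_def by simp
      qed
      ultimately show "x \<in> Z" unfolding Z_def by simp
    qed
  qed
  have spn: "Z \<subseteq> span (Bb \<union> z ` E)"
  proof
    fix h assume h: "h \<in> Z"
    define s where "s = (\<Sum>e\<in>E. \<phi> e h *s z e)"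
    define h' where "h' = h - s"
    have fE: "finite E" using finE unfolding E_def .
    have sV: "s \<in> V" unfolding s_def using V zV
      by (intro subspace_sum) (auto intro: subspace_scale simp: E_def)
    have hV: "h \<in> V" using h unfolding Z_def by simp
    have h'V: "h' \<in> V" unfolding h'_def using V hV sV by (rule subspace_diff)
    have "\<forall>p\<in>FP. \<phi> p h' = 0"
    proof
      fix p assume p: "p \<in> FP"
      have "\<phi> p s = (\<Sum>e\<in>E. \<phi> e h * \<phi> p (z e))" unfolding s_def using fE by (simp add: phisum smul)
      also have "\<dots> = (\<Sum>e\<in>E. (if p = e then \<phi> e h else 0))"
        by (intro sum.cong) (auto simp: zd E_def)
      also have "\<dots> = (if p \<in> E then \<phi> p h else 0)" using fE by (simp add: sum.delta)
      finally have ps: "\<phi> p s = (if p \<in> E then \<phi> p h else 0)" .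
      show "\<phi> p h' = 0"
      proof (cases "p \<in> E")
        case True then show ?thesis unfolding h'_def phidiff ps by simp
      next
        case False
        then have "p \<in> CP" using p unfolding E_def by auto
        then have "\<phi> p h = 0" using h unfolding Z_def by auto
        then show ?thesis unfolding h'_def phidiff ps using False by simp
      qed
    qed
    then have "h' \<in> B" unfolding B_def using h'V by simp
    then have "h' \<in> span Bb" using Bb(3) by auto
    then have a: "h' \<in> span (Bb \<union> z ` E)" using span_mono[of Bb "Bb \<union> z ` E"] by auto
    have b: "s \<in> span (Bb \<union> z ` E)" unfolding s_def
      by (intro span_sum span_scale span_base) auto
    have "h = h' + s" unfolding h'_def by simp
    then show "h \<in> span (Bb \<union> z ` E)" using a b span_add by simp
  qed
  have disj: "Bb \<inter> z ` E = {}"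
  proof (rule ccontr)
    assume "Bb \<inter> z ` E \<noteq> {}"
    then obtain e where e: "e \<in> E" "z e \<in> Bb" by auto
    then have "\<phi> e (z e) = 0" using BbB EFP by auto
    then show False using ze[OF e(1)] by simp
  qed
  have injz: "inj_on z E"
  proof
    fix e e' assume a: "e \<in> E" "e' \<in> E" "z e = z e'"
    show "e = e'"
    proof (rule ccontr)
      assume "e \<noteq> e'"
      then have "\<phi> e (z e') = 0" using zne[of e' e] a by auto
      then show False using ze[OF a(1)] a(3) by simp
    qed
  qed
  have "card (Bb \<union> z ` E) = card Bb + card E"
    using finBb finE disj injz unfolding E_def by (simp add: card_Un_disjoint card_image)
  then have "dim Z = card Bb + card E"
    using dim_unique[OF sub spn indep] by simp
  then show ?thesis unfolding Z_def B_def E_def using Bb(4) unfolding B_def by simp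
qed

end

lemma vs_cscale: "vector_space (cscale :: 'k::field \<Rightarrow> (nat \<Rightarrow> nat \<Rightarrow> nat \<Rightarrow> 'k) \<Rightarrow> _)"
  unfolding vector_space_def cscale_def by (auto simp: fun_eq_iff algebra_simps)

lemma sum_fun_apply: "(sum f A) x = (\<Sum>a\<in>A. f a x)"
  by (induction A rule: infinite_finite_induct) auto

context nak begin

lemma jdim_le: "jdim I j \<le> j"
proof -
  have "length (jbasis I j) \<le> length [0..<j]" unfolding jbasis_def by (rule length_filter_le)
  then show ?thesis unfolding jdim_def by simp
qed

definition unitf :: "nat \<times> nat \<times> nat \<Rightarrow> nat \<Rightarrow> nat \<Rightarrow> nat \<Rightarrow> 'k::field" where
  "unitf x = (\<lambda>t r s. if (t, r, s) = x then 1 else 0)"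

definition Dset :: "(nat \<times> nat \<times> nat) set" where
  "Dset = {(t, r, s). Suc t < m \<and> r < jdim I (Suc t) \<and> s < jdim I t}"

lemma finite_Dset: "finite Dset"
proof -
  have "Dset \<subseteq> {..<m} \<times> {..<m} \<times> {..<m}"
  proof
    fix x assume "x \<in> Dset"
    then obtain t r q where x: "x = (t, r, q)" "Suc t < m" "r < jdim I (Suc t)" "q < jdim I t"
      unfolding Dset_def by auto
    have "jdim I (Suc t) \<le> Suc t" "jdim I t \<le> t" by (rule jdim_le)+
    then show "x \<in> {..<m} \<times> {..<m} \<times> {..<m}" using x by auto
  qed
  then show ?thesis by (rule finite_subset) simp
qed

lemma Hc_add: "Hc (h1 + h2) t u v = Hc h1 t u v + Hc h2 t u v"
  unfolding Hc_def by simp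

lemma Hc_scale: "Hc (cscale c h) t u v = c * Hc h t u v"
  unfolding Hc_def cscale_def by simp

lemma phi_add: "phi (h1 + h2) p = phi h1 p + phi h2 p"
  unfolding phi_def Hc_add by (simp add: sum.distrib)

lemma phi_scale: "phi (cscale c h) p = c * phi h p"
  unfolding phi_def Hc_scale by (simp add: sum_distrib_left)

definition zf :: "nat \<times> nat \<Rightarrow> nat \<Rightarrow> nat \<Rightarrow> nat \<Rightarrow> 'k::field" where
  "zf e = (\<lambda>t r s. if t = fst e \<and> r = jpos (Suc (fst e)) (fst e) \<and> s = jpos (fst e) (snd e) then 1 else 0)"

lemma zf_facts:
  assumes e: "(u, v) \<in> FP"
  shows "Suc u < m" "u \<in> S (Suc u)" "v \<in> S u"
proof -
  have f: "v < u" "u < cc v" "cc v < cc u" using e unfolding FP_def by auto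
  have b: "cc u \<le> m" by (rule cc_le)
  show s: "Suc u < m" using f b by linarith
  show "u \<in> S (Suc u)" using mem_S[OF s, of u] f by linarith
  show "v \<in> S u" using mem_S[of u v] s f by simp
qed

lemma zf_hsupp: "e \<in> FP \<Longrightarrow> hsupp m (jdim I) (jdim I) (zf e :: nat \<Rightarrow> nat \<Rightarrow> nat \<Rightarrow> 'k::field)"
proof -
  assume e: "e \<in> FP"
  obtain u v where uv: "e = (u, v)" by force
  note zz = zf_facts[OF e[unfolded uv]]
  show ?thesis unfolding hsupp_def zf_def uv
    using zz jpos_props(1)[OF zz(2)] jpos_props(1)[OF zz(3)] by auto
qed

lemma Hc_zf:
  assumes e: "(u, v) \<in> FP"
  shows "Hc (zf (u, v)) t u' v' = (if t = u \<and> u' = u \<and> v' = v then (1::'k::field) else 0)"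
proof -
  note zz = zf_facts[OF e]
  show ?thesis
  proof (cases "Suc t < m \<and> u' \<in> S (Suc t) \<and> v' \<in> S t")
    case True
    have "(t = u \<and> jpos (Suc u) u' = jpos (Suc u) u \<and> jpos u v' = jpos u v) \<longleftrightarrow> (t = u \<and> u' = u \<and> v' = v)"
    proof
      assume a: "t = u \<and> jpos (Suc u) u' = jpos (Suc u) u \<and> jpos u v' = jpos u v"
      then have "u' = u" using jpos_inj[of u' "Suc u" u] True zz by auto
      moreover have "v' = v" using a jpos_inj[of v' u v] True zz by auto
      ultimately show "t = u \<and> u' = u \<and> v' = v" using a by simp
    qed auto
    then show ?thesis unfolding Hc_def zf_def using True by auto
  next
    case False
    then show ?thesis unfolding Hc_def using zz by auto
  qed
qed

lemma phi_zf:
  assumes e: "e \<in> FP"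
  shows "phi (zf e) q = (if q = e then (1::'k::field) else 0)"
proof -
  obtain u v where uv: "e = (u, v)" by force
  obtain u' v' where q: "q = (u', v')" by force
  have f: "u < cc v" using e uv unfolding FP_def by auto
  have "phi (zf e) q = (\<Sum>t<cc v'. Hc (zf (u, v)) t u' v')"
    unfolding phi_def uv q by simp
  also have "\<dots> = (\<Sum>t<cc v'. (if t = u \<and> u' = u \<and> v' = v then (1::'k) else 0))"
  proof (rule sum.cong[OF refl])
    fix t show "Hc (zf (u, v)) t u' v' = (if t = u \<and> u' = u \<and> v' = v then (1::'k) else 0)"
      by (rule Hc_zf[OF e[unfolded uv]])
  qed
  also have "\<dots> = (if u' = u \<and> v' = v then 1 else 0)"
  proof (cases "u' = u \<and> v' = v")
    case True
    then show ?thesis using f by (simp add: sum.delta)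
  next
    case False
    then have "\<forall>t\<in>{..<cc v'}. (if t = u \<and> u' = u \<and> v' = v then (1::'k) else 0) = 0" by auto
    then show ?thesis using False by (simp only: sum.neutral) simp
  qed
  finally show ?thesis unfolding uv q by auto
qed

theorem ext1_count: "ext1_JJ TYPE('k::field) m I = card (FP - CP)"
proof -
  interpret vs: vector_space "cscale :: 'k \<Rightarrow> (nat \<Rightarrow> nat \<Rightarrow> nat \<Rightarrow> 'k) \<Rightarrow> _"
    by (rule vs_cscale)
  define V where "V = {hc :: nat \<Rightarrow> nat \<Rightarrow> nat \<Rightarrow> 'k. hsupp m (jdim I) (jdim I) hc}"
  define W where "W = (unitf :: _ \<Rightarrow> nat \<Rightarrow> nat \<Rightarrow> nat \<Rightarrow> 'k) ` Dset"
  have Vsub: "vs.subspace V"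
  proof (rule vs.subspaceI)
    show "0 \<in> V" unfolding V_def hsupp_def by simp
  next
    fix x y assume xy: "x \<in> V" "y \<in> V"
    show "x + y \<in> V" unfolding V_def hsupp_def
    proof (intro CollectI allI impI)
      fix j r q assume "(x + y) j r q \<noteq> 0"
      then have "x j r q \<noteq> 0 \<or> y j r q \<noteq> 0" by auto
      then show "Suc j < m \<and> r < jdim I (Suc j) \<and> q < jdim I j"
        using xy unfolding V_def hsupp_def by blast
    qed
  next
    fix c x assume x: "x \<in> V"
    show "cscale c x \<in> V" unfolding V_def hsupp_def
    proof (intro CollectI allI impI)
      fix j r q assume "cscale c x j r q \<noteq> 0"
      then have "x j r q \<noteq> 0" unfolding cscale_def by auto
      then show "Suc j < m \<and> r < jdim I (Suc j) \<and> q < jdim I j"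
        using x unfolding V_def hsupp_def by blast
    qed
  qed
  have Wfin: "finite W" unfolding W_def using finite_Dset by simp
  have VW: "V \<subseteq> vs.span W"
  proof
    fix h assume h: "h \<in> V"
    define s where "s = (\<Sum>x\<in>Dset. cscale (h (fst x) (fst (snd x)) (snd (snd x))) (unitf x :: nat \<Rightarrow> nat \<Rightarrow> nat \<Rightarrow> 'k))"
    have "s = h"
    proof (intro ext)
      fix t r q
      have "s t r q = (\<Sum>x\<in>Dset. h (fst x) (fst (snd x)) (snd (snd x)) * (if (t, r, q) = x then 1 else 0))"
        unfolding s_def sum_fun_apply cscale_def unitf_def by simp
      also have "\<dots> = (\<Sum>x\<in>Dset. (if x = (t, r, q) then h t r q else 0))"
        by (intro sum.cong) auto
      also have "\<dots> = (if (t, r, q) \<in> Dset then h t r q else 0)"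
        using finite_Dset by (simp add: sum.delta')
      also have "\<dots> = h t r q"
        using h unfolding V_def hsupp_def Dset_def by auto
      finally show "s t r q = h t r q" .
    qed
    moreover have "s \<in> vs.span W" unfolding s_def W_def
      by (intro vs.span_sum vs.span_scale vs.span_base) auto
    ultimately show "h \<in> vs.span W" by simp
  qed
  have main: "vs.dim {h\<in>V. \<forall>p\<in>CP. phi h p = 0} = vs.dim {h\<in>V. \<forall>p\<in>FP. phi h p = 0} + card (FP - CP)"
  proof (rule vs.dim_count[where \<phi> = "\<lambda>p h. phi h p" and z = zf])
    show "vs.subspace V" by (rule Vsub)
    show "finite W" by (rule Wfin)
    show "V \<subseteq> vs.span W" by (rule VW)
    show "\<And>p x y. phi (x + y) p = phi x p + phi y p" by (rule phi_add)
    show "\<And>p c x. phi (cscale c x) p = c * phi x p" by (rule phi_scale)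
    show "finite (FP - CP)" using finite_FP by simp
    show "\<And>e. e \<in> FP - CP \<Longrightarrow> zf e \<in> V" unfolding V_def using zf_hsupp by auto
    show "\<And>e q. e \<in> FP - CP \<Longrightarrow> phi (zf e) q = (if q = e then 1 else 0)"
    proof -
      fix e q assume "e \<in> FP - CP"
      then have "e \<in> FP" by simp
      then show "phi (zf e) q = (if q = e then 1 else 0)" by (rule phi_zf)
    qed
    show "\<And>h. h \<in> V \<Longrightarrow> \<forall>p\<in>FP. phi h p = 0 \<Longrightarrow> \<forall>p\<in>CP. phi h p = 0" unfolding CP_def by auto
  qed
  have Zeq: "ext_cocycles m I (jdim I) (jmap I :: nat \<Rightarrow> 'k mat) (jdim I) (jmap I) = {h\<in>V. \<forall>p\<in>CP. phi h p = 0}"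
    unfolding V_def using Zchar2 by blast
  have Beq: "ext_coboundaries m (jdim I) (jmap I :: nat \<Rightarrow> 'k mat) (jdim I) (jmap I) = {h\<in>V. \<forall>p\<in>FP. phi h p = 0}"
    unfolding V_def using Bchar by blast
  show ?thesis unfolding ext1_JJ_def ext1_dim_def Zeq Beq main by simp
qed

lemma EP_eq: "FP - CP = {(u, v). v < u \<and> u < cc v \<and> cc v < cc u \<and> cc (Suc v) = cc u}"
proof (rule Set.set_eqI)
  fix p :: "nat \<times> nat"
  obtain u v where p: "p = (u, v)" by force
  show "p \<in> FP - CP \<longleftrightarrow> p \<in> {(u, v). v < u \<and> u < cc v \<and> cc v < cc u \<and> cc (Suc v) = cc u}"
  proof (cases "(u, v) \<in> FP")
    case False
    then show ?thesis unfolding p FP_def by auto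
  next
    case True
    have f: "v < u" "u < cc v" "cc v < cc u" using True unfolding FP_def by auto
    have le: "cc (Suc v) \<le> cc u" using f(1) cc_mono by simp
    have "(u, v) \<in> CP \<longleftrightarrow> cc (Suc v) < cc u"
    proof
      assume "(u, v) \<in> CP"
      then obtain i j where w: "(i, j) \<in> I" "u \<in> S j" "v \<in> S i" unfolding CP_def by auto
      have wf: "v < i" "j < cc u" "j < m" "i < m" using wit_facts[OF w] by auto
      have "cc i \<le> j" using w(1) I_iff wf by auto
      moreover have "cc (Suc v) \<le> cc i" using wf cc_mono by simp
      ultimately show "cc (Suc v) < cc u" using wf by linarith
    next
      assume lt: "cc (Suc v) < cc u"
      have ccm: "cc u \<le> m" by (rule cc_le)
      define j where "j = cc (Suc v)"
      have jm: "j < m" unfolding j_def using lt ccm by linarith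
      have sv: "Suc v < m" using jm f cc_mono[of "Suc v"] unfolding j_def
        by (metis Suc_leI cc_le le_less_trans not_less)
      have "(Suc v, j) \<in> I" using I_iff[OF jm] unfolding j_def by simp
      moreover have "u \<in> S j"
      proof -
        have "cc v \<le> j" unfolding j_def using cc_mono by simp
        then show ?thesis using mem_S[OF jm, of u] f lt unfolding j_def by linarith
      qed
      moreover have "v \<in> S (Suc v)" using mem_S[OF sv, of v] f by linarith
      ultimately show "(u, v) \<in> CP" unfolding CP_def using True by blast
    qed
    then show ?thesis unfolding p using True le f by auto
  qed
qed

end

definition ccl :: "nat \<Rightarrow> (nat \<times> nat) set \<Rightarrow> nat list" where
  "ccl m I = map (nak.cc m I) [0..<m]"

lemma nak_I: "lin_nak_ideal m I \<Longrightarrow> nak m I"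
  unfolding nak_def by simp

lemma ccl_seqs:
  assumes "lin_nak_ideal m I"
  shows "ccl m I \<in> seqs m"
proof -
  interpret nak m I by (rule nak_I[OF assms])
  show ?thesis unfolding seqs_def ccl_def
  proof (intro CollectI conjI allI impI)
    fix i assume i: "i < m"
    show "min (i + 2) m \<le> map cc [0..<m] ! i" using i cc_ge[of i] cc_le[of i] by (cases "cc i < m") auto
    show "map cc [0..<m] ! i \<le> m" using i cc_le by simp
  next
    fix i j assume "i \<le> j" "j < m"
    then show "map cc [0..<m] ! i \<le> map cc [0..<m] ! j" using cc_mono by simp
  qed simp
qed

lemma I_from_cc:
  assumes "lin_nak_ideal m I"
  shows "I = {(i, j). i < m \<and> j < m \<and> nak.cc m I i \<le> j}"
proof -
  interpret nak m I by (rule nak_I[OF assms])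
  show ?thesis
  proof (rule Set.set_eqI)
    fix p :: "nat \<times> nat"
    obtain i j where p: "p = (i, j)" by force
    show "p \<in> I \<longleftrightarrow> p \<in> {(i, j). i < m \<and> j < m \<and> cc i \<le> j}"
    proof
      assume "p \<in> I"
      then have "(i, j) \<in> I" using p by simp
      then have "i + 2 \<le> j" "j < m" "cc i \<le> j" using I_sub I_iff by auto
      then show "p \<in> {(i, j). i < m \<and> j < m \<and> cc i \<le> j}" using p by auto
    next
      assume "p \<in> {(i, j). i < m \<and> j < m \<and> cc i \<le> j}"
      then show "p \<in> I" using p I_iff by auto
    qed
  qed
qed

definition Iof :: "nat \<Rightarrow> nat list \<Rightarrow> (nat \<times> nat) set" where
  "Iof m c = {(i, j). i < m \<and> j < m \<and> c ! i \<le> j}"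

lemma Iof_ideal:
  assumes c: "c \<in> seqs m"
  shows "lin_nak_ideal m (Iof m c)"
  unfolding lin_nak_ideal_def
proof (intro conjI allI impI)
  show "Iof m c \<subseteq> {(i, j). i + 2 \<le> j \<and> j < m}"
  proof
    fix p assume "p \<in> Iof m c"
    then obtain i j where p: "p = (i, j)" "i < m" "j < m" "c ! i \<le> j" unfolding Iof_def by auto
    have "min (i + 2) m \<le> c ! i" using seqs_bnd[OF c p(2)] by simp
    then have "i + 2 \<le> j" using p by (cases "i + 2 \<le> m") auto
    then show "p \<in> {(i, j). i + 2 \<le> j \<and> j < m}" using p by auto
  qed
next
  fix i j i' j' assume a: "(i, j) \<in> Iof m c" "i' \<le> i" "j \<le> j'" "j' < m"
  then have "i < m" "c ! i \<le> j" unfolding Iof_def by auto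
  moreover have "c ! i' \<le> c ! i" using seqs_mono[OF c a(2)] \<open>i < m\<close> by simp
  ultimately show "(i', j') \<in> Iof m c" unfolding Iof_def using a by auto
qed

lemma ccl_Iof:
  assumes c: "c \<in> seqs m"
  shows "ccl m (Iof m c) = c"
proof -
  interpret nak m "Iof m c" by (rule nak_I[OF Iof_ideal[OF c]])
  have len: "length c = m" using seqs_len[OF c] .
  have "cc i = c ! i" if i: "i < m" for i
  proof -
    have b: "c ! i \<le> m" using seqs_bnd[OF c i] by simp
    show ?thesis unfolding cc_def
    proof (rule Least_equality)
      show "c ! i = m \<or> (i, c ! i) \<in> Iof m c" using b i unfolding Iof_def by auto
    next
      fix y assume "y = m \<or> (i, y) \<in> Iof m c"
      then show "c ! i \<le> y" using b unfolding Iof_def by auto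
    qed
  qed
  then show ?thesis unfolding ccl_def using len by (intro nth_equalityI) auto
qed

lemma ideals_bij: "bij_betw (ccl m) {I. lin_nak_ideal m I} (seqs m)"
  unfolding bij_betw_def
proof
  show "inj_on (ccl m) {I. lin_nak_ideal m I}"
  proof
    fix I1 I2 assume a: "I1 \<in> {I. lin_nak_ideal m I}" "I2 \<in> {I. lin_nak_ideal m I}" "ccl m I1 = ccl m I2"
    have "\<And>i. i < m \<Longrightarrow> nak.cc m I1 i = nak.cc m I2 i"
    proof -
      fix i assume "i < m"
      then show "nak.cc m I1 i = nak.cc m I2 i" using arg_cong[OF a(3), of "\<lambda>l. l ! i"] unfolding ccl_def by simp
    qed
    then have "\<And>i j. (i < m \<and> j < m \<and> nak.cc m I1 i \<le> j) = (i < m \<and> j < m \<and> nak.cc m I2 i \<le> j)"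
      by auto
    then have "{(i, j). i < m \<and> j < m \<and> nak.cc m I1 i \<le> j} = {(i, j). i < m \<and> j < m \<and> nak.cc m I2 i \<le> j}"
      by simp
    then show "I1 = I2" using I_from_cc[of m I1] I_from_cc[of m I2] a by simp
  qed
  show "ccl m ` {I. lin_nak_ideal m I} = seqs m"
  proof
    show "ccl m ` {I. lin_nak_ideal m I} \<subseteq> seqs m" using ccl_seqs by auto
    show "seqs m \<subseteq> ccl m ` {I. lin_nak_ideal m I}"
    proof
      fix c assume c: "c \<in> seqs m"
      then have "c = ccl m (Iof m c)" using ccl_Iof by simp
      then show "c \<in> ccl m ` {I. lin_nak_ideal m I}" using Iof_ideal[OF c] by blast
    qed
  qed
qed

lemma ext1_st:
  assumes "lin_nak_ideal m I"
  shows "ext1_JJ TYPE('k::field) m I = st (ccl m I)"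
proof -
  interpret nak m I by (rule nak_I[OF assms])
  have "ext1_JJ TYPE('k) m I = card (FP - CP)" by (rule ext1_count)
  also have "FP - CP = {(u, v). v < u \<and> u < length (ccl m I) \<and> u < ccl m I ! v \<and> ccl m I ! v < ccl m I ! u \<and> ccl m I ! Suc v = ccl m I ! u}"
    unfolding EP_eq
  proof (rule Set.set_eqI)
    fix p :: "nat \<times> nat"
    obtain u v where p: "p = (u, v)" by force
    have iff: "(v < u \<and> u < cc v \<and> cc v < cc u \<and> cc (Suc v) = cc u) \<longleftrightarrow>
          (v < u \<and> u < m \<and> u < ccl m I ! v \<and> ccl m I ! v < ccl m I ! u \<and> ccl m I ! Suc v = ccl m I ! u)"
    proof
      assume a: "v < u \<and> u < cc v \<and> cc v < cc u \<and> cc (Suc v) = cc u"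
      have "u < m" using a cc_le[of v] by linarith
      then show "v < u \<and> u < m \<and> u < ccl m I ! v \<and> ccl m I ! v < ccl m I ! u \<and> ccl m I ! Suc v = ccl m I ! u"
        using a unfolding ccl_def by auto
    next
      assume a: "v < u \<and> u < m \<and> u < ccl m I ! v \<and> ccl m I ! v < ccl m I ! u \<and> ccl m I ! Suc v = ccl m I ! u"
      then have "v < m" "Suc v < m" by auto
      then show "v < u \<and> u < cc v \<and> cc v < cc u \<and> cc (Suc v) = cc u"
        using a unfolding ccl_def by auto
    qed
    show "p \<in> {(u, v). v < u \<and> u < cc v \<and> cc v < cc u \<and> cc (Suc v) = cc u} \<longleftrightarrow>
          p \<in> {(u, v). v < u \<and> u < length (ccl m I) \<and> u < ccl m I ! v \<and> ccl m I ! v < ccl m I ! u \<and> ccl m I ! Suc v = ccl m I ! u}"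
      unfolding p using iff by (simp add: ccl_def)
  qed
  finally show ?thesis unfolding st_def by simp
qed

lemma count_ideals:
  assumes k: "k \<le> n"
  shows "card {I. lin_nak_ideal (n + 2) I \<and> ext1_JJ TYPE('k::field) (n + 2) I = k} = fb n k"
proof -
  let ?m = "n + 2"
  have "bij_betw (ccl ?m) {I. lin_nak_ideal ?m I \<and> ext1_JJ TYPE('k) ?m I = k} {c \<in> seqs ?m. st c = k}"
  proof -
    have b: "bij_betw (ccl ?m) {I. lin_nak_ideal ?m I} (seqs ?m)" by (rule ideals_bij)
    have e: "{I. lin_nak_ideal ?m I \<and> ext1_JJ TYPE('k) ?m I = k} = {I \<in> {I. lin_nak_ideal ?m I}. st (ccl ?m I) = k}"
      using ext1_st by auto
    show ?thesis unfolding e using b unfolding bij_betw_def inj_on_def by (auto simp: image_iff)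
  qed
  then have "card {I. lin_nak_ideal ?m I \<and> ext1_JJ TYPE('k) ?m I = k} = card {c \<in> seqs ?m. st c = k}"
    by (rule bij_betw_same_card)
  also have "{c \<in> seqs ?m. st c = k} = {c \<in> seqs ?m. 0 < c ! 0 \<and> wt 0 c = k}"
  proof -
    have "\<And>c. c \<in> seqs ?m \<Longrightarrow> 0 < c ! 0" using seqs_bnd[of _ ?m 0] by fastforce
    moreover have "\<And>c. wt 0 c = st c" unfolding wt_def by simp
    ultimately show ?thesis by auto
  qed
  also have "card \<dots> = PP ?m 0 k" unfolding PP_def by simp
  also have "\<dots> = fb n k" using PP_closed[of ?m 0 k] k by simp
  finally show ?thesis .
qed

theorem mainTheorem3:
  fixes n :: nat
  shows "(\<forall>k \<le> n. card {I. lin_nak_ideal (n + 2) I \<and> ext1_JJ TYPE('k::field) (n + 2) I = k}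
                   = syt_count n k) \<and>
         real (card {I. lin_nak_ideal (n + 2) I \<and> ext1_JJ TYPE('k::field) (n + 2) I = n})
           = real ((2 * n) choose n) / real (n + 1)"
proof -
  have a: "\<forall>k \<le> n. card {I. lin_nak_ideal (n + 2) I \<and> ext1_JJ TYPE('k::field) (n + 2) I = k} = syt_count n k"
    using count_ideals[where 'k = 'k] syt_count_fb by simp
  have b: "card {I. lin_nak_ideal (n + 2) I \<and> ext1_JJ TYPE('k::field) (n + 2) I = n} = fb n n"
    using count_ideals[where 'k = 'k, of n n] by simp
  show ?thesis using a b fb_catalan[of n] by simp
qed

end
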